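(* Let $k$ be a field of characteristic zero. Every irreducible locally nilpotent derivation $\delta$ of $k[x,y]$ is the last term of a full irreducible C-chain, i.e. there is a sequence of irreducible LNDs $\delta_1=\frac{\partial}{\partial x},\ \delta_2=\frac{\partial}{\partial y},\ \delta_3,\dots,\delta_l=\delta$ such that for each $2\le i\le l-1$, $\delta_{i-1}$ and $\delta_i$ commute and $\delta_{i+1}=a_i\delta_{i-1}+b_i\delta_i$ with $a_i\in\mathrm{Ker}\,\delta_{i-1}\cap\mathrm{Ker}\,\delta_i$ and $b_i\in\mathrm{Ker}\,\delta_i$.
   Context: LND = locally nilpotent derivation; irreducible = image not contained in a proper principal ideal. (A derivation $\delta_{i+1}$ obtained in this way from commuting LNDs $\delta_{i-1},\delta_i$ is an LND commuting with $\delta_i$.) *)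

theory Defs
  imports "HOL-Computational_Algebra.Polynomial"
begin

text \<open>The polynomial ring k[x,y] is represented as ('a poly) poly = (k[x])[y]:
  the outer variable is y, the coefficients are polynomials in x.\<close>

type_synonym 'a bipoly = "'a poly poly"

definition const2 :: "'a::zero \<Rightarrow> 'a bipoly" where
  "const2 c = [:[:c:]:]"

definition is_derivation :: "('a::field bipoly \<Rightarrow> 'a bipoly) \<Rightarrow> bool" where
  "is_derivation D \<longleftrightarrow>
     (\<forall>f g. D (f + g) = D f + D g) \<and>
     (\<forall>c f. D (const2 c * f) = const2 c * D f) \<and>
     (\<forall>f g. D (f * g) = f * D g + g * D f)"

definition is_LND :: "('a::field bipoly \<Rightarrow> 'a bipoly) \<Rightarrow> bool" where
  "is_LND D \<longleftrightarrow> is_derivation D \<and> (\<forall>f. \<exists>n. (D ^^ n) f = 0)"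

definition irreducible_der :: "('a::field bipoly \<Rightarrow> 'a bipoly) \<Rightarrow> bool" where
  "irreducible_der D \<longleftrightarrow> \<not> (\<exists>h. \<not> is_unit h \<and> (\<forall>f. h dvd D f))"

definition ker_der :: "('a::field bipoly \<Rightarrow> 'a bipoly) \<Rightarrow> 'a bipoly set" where
  "ker_der D = {f. D f = 0}"

definition dx :: "'a::field bipoly \<Rightarrow> 'a bipoly" where
  "dx f = map_poly pderiv f"

definition dy :: "'a::field bipoly \<Rightarrow> 'a bipoly" where
  "dy f = pderiv f"

text \<open>Full irreducible C-chain (list ds = [\<delta>_1, ..., \<delta>_l], 0-indexed).\<close>
definition full_irreducible_C_chain :: "('a::field bipoly \<Rightarrow> 'a bipoly) list \<Rightarrow> bool" where
  "full_irreducible_C_chain ds \<longleftrightarrow>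
     2 \<le> length ds \<and> ds ! 0 = dx \<and> ds ! 1 = dy \<and>
     (\<forall>D \<in> set ds. is_LND D \<and> irreducible_der D) \<and>
     (\<forall>j. 1 \<le> j \<and> j + 1 < length ds \<longrightarrow>
        ds ! (j - 1) \<circ> ds ! j = ds ! j \<circ> ds ! (j - 1) \<and>
        (\<exists>a b. a \<in> ker_der (ds ! (j - 1)) \<inter> ker_der (ds ! j) \<and> b \<in> ker_der (ds ! j) \<and>
           ds ! (j + 1) = (\<lambda>f. a * (ds ! (j - 1)) f + b * (ds ! j) f)))"

end

theory Submission
  imports Defs "HOL-Computational_Algebra.Polynomial_Factorial"
begin


definition Xv :: "'a::comm_ring_1 bipoly" where "Xv = [:[:0,1:]:]"
definition Yv :: "'a::comm_ring_1 bipoly" where "Yv = [:0,1:]"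
definition cf :: "'a::zero bipoly \<Rightarrow> nat \<Rightarrow> nat \<Rightarrow> 'a" where "cf f i j = coeff (coeff f j) i"

lemma const2_0[simp]: "const2 0 = 0" by (simp add: const2_def)
lemma const2_1[simp]: "const2 1 = 1" by (simp add: const2_def one_pCons)
lemma const2_add: "const2 (a + b) = const2 a + const2 b" by (simp add: const2_def)
lemma const2_mult: "const2 ((a::'a::comm_ring_1) * b) = const2 a * const2 b" by (simp add: const2_def)
lemma const2_diff: "const2 ((a::'a::comm_ring_1) - b) = const2 a - const2 b" by (simp add: const2_def)
lemma const2_uminus: "const2 (-(a::'a::comm_ring_1)) = - const2 a" by (simp add: const2_def)
lemma const2_pow: "const2 ((a::'a::comm_ring_1) ^ n) = const2 a ^ n"
  by (induct n) (simp_all add: const2_mult)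
lemma const2_of_nat: "const2 (of_nat n :: 'a::comm_ring_1) = of_nat n"
  by (induct n) (simp_all add: const2_add)
lemma const2_eq_iff[simp]: "const2 a = const2 b \<longleftrightarrow> a = b" by (simp add: const2_def)
lemma const2_eq_0_iff[simp]: "const2 a = 0 \<longleftrightarrow> a = 0" by (simp add: const2_def)

lemma cf_eqI: "(\<And>i j. cf f i j = cf g i j) \<Longrightarrow> f = g"
  by (metis cf_def poly_eqI)
lemma cf_0[simp]: "cf 0 i j = 0" by (simp add: cf_def)
lemma cf_add[simp]: "cf (f + g) i j = cf f i j + cf g i j" by (simp add: cf_def)
lemma cf_diff[simp]: "cf (f - g) i j = cf f i j - cf g i j" by (simp add: cf_def)
lemma cf_uminus[simp]: "cf (- f) i j = - cf f i j" by (simp add: cf_def)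
lemma cf_const2: "cf (const2 c) i j = (if i = 0 \<and> j = 0 then c else 0)"
  by (simp add: cf_def const2_def coeff_pCons split: nat.splits)
lemma cf_cmult[simp]: "cf (const2 c * f) i j = c * cf f i j"
proof -
  have "const2 c * f = smult [:c:] f" by (simp add: const2_def)
  then show ?thesis by (simp add: cf_def)
qed
lemma cf_sum: "cf (sum g A) i j = (\<Sum>x\<in>A. cf (g x) i j)"
  by (induct A rule: infinite_finite_induct) simp_all

lemma cf_mult: "cf (f * g) i j = (\<Sum>j1\<le>j. \<Sum>i1\<le>i. cf f i1 j1 * cf g (i - i1) (j - j1))"
  by (simp add: cf_def coeff_mult coeff_sum)

lemma cf_Xmult: "cf (Xv * f) i j = (if i = 0 then 0 else cf f (i - 1) j)"
proof -
  have "Xv * f = smult [:0,1:] f" by (simp add: Xv_def)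
  then show ?thesis by (simp add: cf_def coeff_pCons split: nat.splits)
qed

lemma cf_Ymult: "cf (Yv * f) i j = (if j = 0 then 0 else cf f i (j - 1))"
proof -
  have "Yv * f = pCons 0 f" by (simp add: Yv_def)
  then show ?thesis by (simp add: cf_def coeff_pCons split: nat.splits)
qed

lemma cf_Xpow_mult: "cf (Xv ^ n * f) i j = (if n \<le> i then cf f (i - n) j else 0)"
  by (induct n arbitrary: i) (auto simp: cf_Xmult mult.assoc)

lemma cf_Ypow_mult: "cf (Yv ^ n * f) i j = (if n \<le> j then cf f i (j - n) else 0)"
  by (induct n arbitrary: j) (auto simp: cf_Ymult mult.assoc)

definition mon :: "'a::comm_ring_1 \<Rightarrow> nat \<Rightarrow> nat \<Rightarrow> 'a bipoly" where
  "mon c i j = const2 c * Xv ^ i * Yv ^ j"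

lemma cf_mon: "cf (mon c i j) i' j' = (if i' = i \<and> j' = j then c else 0)"
proof -
  have "mon c i j = Yv ^ j * (Xv ^ i * const2 c)" by (simp add: mon_def ac_simps)
  then show ?thesis by (auto simp: cf_Ypow_mult cf_Xpow_mult cf_const2)
qed

definition supp :: "'a::zero bipoly \<Rightarrow> (nat \<times> nat) set" where
  "supp f = {(i,j). cf f i j \<noteq> 0}"

definition bnd :: "'a::zero bipoly \<Rightarrow> nat" where
  "bnd f = (\<Sum>j\<le>degree f. degree (coeff f j))"

lemma cf_nz_bound: assumes "cf f i j \<noteq> 0" shows "i \<le> bnd f" "j \<le> degree f"
proof -
  show j: "j \<le> degree f" using assms by (metis cf_def coeff_0 le_degree)
  have "i \<le> degree (coeff f j)" using assms by (metis cf_def le_degree)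
  also have "\<dots> \<le> bnd f" unfolding bnd_def by (rule member_le_sum) (use j in auto)
  finally show "i \<le> bnd f" .
qed

lemma finite_supp: "finite (supp f)"
proof -
  have "supp f \<subseteq> {..bnd f} \<times> {..degree f}" using cf_nz_bound by (auto simp: supp_def)
  then show ?thesis by (rule finite_subset) auto
qed

lemma supp_decomp: "f = (\<Sum>(i,j)\<in>supp f. mon (cf f i j) i j)"
proof (rule cf_eqI)
  fix i j
  have "cf (\<Sum>(i',j')\<in>supp f. mon (cf f i' j') i' j') i j
     = (\<Sum>x\<in>supp f. (if x = (i,j) then cf f i j else 0))"
    unfolding cf_sum by (rule sum.cong) (auto simp: cf_mon split: if_splits)
  also have "\<dots> = cf f i j"
    using finite_supp[of f] by (simp add: sum.delta supp_def)
  finally show "cf f i j = cf (\<Sum>(i',j')\<in>supp f. mon (cf f i' j') i' j') i j" by simp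
qed

definition lin :: "('a::comm_ring_1 bipoly \<Rightarrow> 'a bipoly) \<Rightarrow> bool" where
  "lin T \<longleftrightarrow> (\<forall>f g. T (f + g) = T f + T g) \<and> (\<forall>c f. T (const2 c * f) = const2 c * T f)"

lemma lin_0: "lin T \<Longrightarrow> T 0 = 0"
  unfolding lin_def by (metis add_cancel_right_right add_0)

lemma lin_sum: "lin T \<Longrightarrow> T (sum g A) = (\<Sum>x\<in>A. T (g x))"
  by (induct A rule: infinite_finite_induct) (auto simp: lin_0 lin_def)

lemma lin_decomp: assumes "lin T"
  shows "T f = (\<Sum>(i,j)\<in>supp f. const2 (cf f i j) * T (Xv ^ i * Yv ^ j))"
proof -
  have "T f = T (\<Sum>(i,j)\<in>supp f. mon (cf f i j) i j)" by (subst supp_decomp) simp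
  also have "\<dots> = (\<Sum>x\<in>supp f. T ((\<lambda>(i,j). mon (cf f i j) i j) x))" by (rule lin_sum[OF assms])
  also have "\<dots> = (\<Sum>(i,j)\<in>supp f. const2 (cf f i j) * T (Xv ^ i * Yv ^ j))"
    using assms by (intro sum.cong) (auto simp: mon_def lin_def mult.assoc)
  finally show ?thesis .
qed

lemma lin_eqI: assumes "lin S" "lin T" "\<And>i j. cf f i j \<noteq> 0 \<Longrightarrow> S (Xv ^ i * Yv ^ j) = T (Xv ^ i * Yv ^ j)"
  shows "S f = T f"
  using assms(3) by (subst lin_decomp[OF assms(1)], subst lin_decomp[OF assms(2)])
     (intro sum.cong, auto simp: supp_def)

lemma bipoly_induct:
  fixes P :: "'a::comm_ring_1 bipoly \<Rightarrow> bool"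
  assumes c: "\<And>c. P (const2 c)" and x: "P Xv" and y: "P Yv"
    and add: "\<And>f g. P f \<Longrightarrow> P g \<Longrightarrow> P (f + g)" and mult: "\<And>f g. P f \<Longrightarrow> P g \<Longrightarrow> P (f * g)"
  shows "P f"
proof -
  have inner: "P [:c:]" for c :: "'a poly"
  proof (induct c rule: pCons_induct)
    case 0 then show ?case using c[of 0] by (simp add: const2_def)
  next
    case (pCons a c)
    have "[:pCons a c:] = const2 a + Xv * [:c:]"
      by (simp add: const2_def Xv_def)
    then show ?case using add[OF c mult[OF x pCons(2)]] by simp
  qed
  show ?thesis
  proof (induct f rule: pCons_induct)
    case 0 then show ?case using c[of 0] by simp
  next
    case (pCons a f)
    have "pCons a f = [:a:] + Yv * f" by (simp add: Yv_def)
    then show ?case using add[OF inner mult[OF y pCons(2)]] by simp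
  qed
qed


declare funpow.simps(2)[simp del]
lemma iter_Suc: "((D::'b\<Rightarrow>'b)^^Suc n) f = D ((D^^n) f)" by (simp add: funpow.simps(2))
lemma iter_1[simp]: "((D::'b\<Rightarrow>'b)^^Suc 0) f = D f" by (simp add: funpow.simps(2))
lemma pderiv_X: "pderiv [:0,1::'a::idom:] = 1"
  by (rule poly_eqI) (simp add: coeff_pderiv coeff_pCons split: nat.split)

context fixes D :: "'a::field_char_0 bipoly \<Rightarrow> 'a bipoly" assumes der: "is_derivation D"
begin
lemma der_add: "D (f+g) = D f + D g" using der unfolding is_derivation_def by blast
lemma der_mult: "D (f*g) = f * D g + g * D f" using der unfolding is_derivation_def by blast
lemma der_cmult: "D (const2 c * f) = const2 c * D f" using der unfolding is_derivation_def by blast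
lemma der_0[simp]: "D 0 = 0" using der_add[of 0 0] by simp
lemma der_1[simp]: "D 1 = 0" using der_mult[of 1 1] by simp
lemma der_const2[simp]: "D (const2 c) = 0"
proof -
  have "D (const2 c * 1) = const2 c * D 1" by (rule der_cmult)
  then show ?thesis by simp
qed
lemma der_uminus: "D (- f) = - D f" using der_add[of f "-f"] by (simp add: add_eq_0_iff)
lemma der_diff: "D (f - g) = D f - D g" using der_add[of f "-g"] der_uminus[of g] by simp
lemma der_pow: "D (f ^ Suc n) = of_nat (Suc n) * f ^ n * D f"
  by (induct n) (simp_all add: der_mult algebra_simps)
lemma der_sum: "D (sum g A) = (\<Sum>x\<in>A. D (g x))"
  by (induct A rule: infinite_finite_induct) (simp_all add: der_add)

lemma iter_add: "(D^^n) (f + g) = (D^^n) f + (D^^n) g"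
  by (induct n) (simp_all add: der_add iter_Suc)
lemma iter_cmult: "(D^^n) (const2 c * f) = const2 c * (D^^n) f"
  by (induct n) (simp_all add: der_cmult iter_Suc)
lemma iter_0[simp]: "(D^^n) 0 = 0"
  by (induct n) (simp_all add: iter_Suc)
lemma iter_uminus: "(D^^n) (- f) = - (D^^n) f"
  by (induct n) (simp_all add: der_uminus iter_Suc)
lemma iter_diff: "(D^^n) (f - g) = (D^^n) f - (D^^n) g"
  by (induct n) (simp_all add: der_diff iter_Suc)
lemma lin_iter: "lin (D^^n)" by (simp add: lin_def iter_add iter_cmult)
lemma iter_mono: "(D^^n) f = 0 \<Longrightarrow> n \<le> m \<Longrightarrow> (D^^m) f = 0"
  by (metis funpow_add iter_0 le_add_diff_inverse2 comp_apply)
lemma iter_Suc': "(D^^Suc n) f = (D^^n) (D f)" by (simp add: funpow_Suc_right)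

lemma iter_kernel: "D g = 0 \<Longrightarrow> (D^^n) (f * g) = (D^^n) f * g"
  by (induct n) (simp_all add: der_mult iter_Suc)

lemma leib: "(D^^Suc m) f = 0 \<Longrightarrow> (D^^Suc n) g = 0 \<Longrightarrow>
   (D^^Suc (m+n)) (f*g) = 0 \<and> (D^^(m+n)) (f*g) = of_nat ((m+n) choose m) * (D^^m) f * (D^^n) g"
proof (induct "m+n" arbitrary: m n f g rule: less_induct)
  case less
  show ?case
  proof (cases m)
    case 0
    then have "D f = 0" using less(2) by (simp add: iter_Suc)
    then have k: "(D^^k) (f*g) = f * (D^^k) g" for k using iter_kernel[of f k g] by (simp add: mult.commute)
    show ?thesis using less(3) 0 by (simp only: k) simp
  next
    case (Suc m')
    show ?thesis
    proof (cases n)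
      case 0
      then have "D g = 0" using less(3) by (simp add: iter_Suc)
      then have k: "(D^^k) (f*g) = (D^^k) f * g" for k using iter_kernel[of g k f] by simp
      show ?thesis using less(2) 0 by (simp only: k) simp
    next
      case (Suc n')
      have g': "(D^^Suc n') (D g) = 0" using less(3) Suc by (simp add: iter_Suc'[symmetric])
      have f': "(D^^Suc m') (D f) = 0" using less(2) \<open>m = Suc m'\<close> by (simp add: iter_Suc'[symmetric])
      have IH1: "(D^^Suc (m+n')) (f * D g) = 0 \<and> (D^^(m+n')) (f * D g) = of_nat ((m+n') choose m) * (D^^m) f * (D^^n') (D g)"
        using less(1)[of m n' f "D g"] less(2) g' Suc by simp
      have IH2: "(D^^Suc (m'+n)) (D f * g) = 0 \<and> (D^^(m'+n)) (D f * g) = of_nat ((m'+n) choose m') * (D^^m') (D f) * (D^^n) g"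
        using less(1)[of m' n "D f" g] less(3) f' \<open>m = Suc m'\<close> by simp
      have e1: "m + n' = Suc (m' + n')" "m' + n = Suc (m' + n')" "m + n = Suc (Suc (m'+n'))"
        using Suc \<open>m = Suc m'\<close> by simp_all
      have d: "D (f * g) = f * D g + D f * g" by (simp add: der_mult mult.commute)
      have A: "(D^^Suc (m+n)) (f*g) = (D^^Suc (m+n')) (f * D g) + (D^^Suc (m'+n)) (D f * g)"
        unfolding iter_Suc' d iter_add using e1 by (simp add: iter_Suc')
      have B: "(D^^(m+n)) (f*g) = (D^^(m+n')) (f * D g) + (D^^(m'+n)) (D f * g)"
        using e1 by (simp add: iter_Suc' d iter_add)
      have C: "(D^^n') (D g) = (D^^n) g" "(D^^m') (D f) = (D^^m) f"
        using Suc \<open>m = Suc m'\<close> by (simp_all add: iter_Suc'[symmetric])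
      have ch: "(m + n) choose m = ((m+n') choose m) + ((m'+n) choose m')"
        using e1 \<open>m = Suc m'\<close> by simp
      have s1: "(D^^Suc (m+n)) (f*g) = 0" using A IH1 IH2 by simp
      have "(D^^(m+n)) (f*g) = of_nat ((m+n') choose m) * ((D^^m) f * (D^^n) g) + of_nat ((m'+n) choose m') * ((D^^m) f * (D^^n) g)"
        using B IH1 IH2 C by (simp add: mult.assoc)
      also have "\<dots> = of_nat ((m + n) choose m) * ((D^^m) f * (D^^n) g)"
        unfolding ch of_nat_add distrib_right ..
      finally show ?thesis using s1 by (simp add: mult.assoc)
    qed
  qed
qed

definition Lf :: "nat \<Rightarrow> 'a bipoly \<Rightarrow> 'a bipoly" where
  "Lf m f = const2 (inverse (fact m)) * (D^^m) f"

lemma Lf_mult: assumes "(D^^Suc m) f = 0" "(D^^Suc n) g = 0"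
  shows "(D^^Suc (m+n)) (f*g) = 0" "Lf (m+n) (f*g) = Lf m f * Lf n g"
proof -
  note L = leib[OF assms]
  show "(D^^Suc (m+n)) (f*g) = 0" using L by blast
  have "(of_nat ((m+n) choose m) :: 'a) = fact (m+n) / (fact m * fact n)"
    using binomial_fact[of m "m+n"] by simp
  then have "inverse (fact (m+n)) * (of_nat ((m+n) choose m) :: 'a) = inverse (fact m) * inverse (fact n)"
    by (simp add: field_simps)
  then have "const2 (inverse (fact (m+n))) * (of_nat ((m+n) choose m) :: 'a bipoly) = const2 (inverse (fact m)) * const2 (inverse (fact n))"
    by (metis const2_mult const2_of_nat)
  moreover have "(D^^(m+n)) (f*g) = of_nat ((m+n) choose m) * ((D^^m) f * (D^^n) g)"
    using L by (simp add: mult.assoc)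
  ultimately have "Lf (m+n) (f*g) = (const2 (inverse (fact m)) * const2 (inverse (fact n))) * ((D^^m) f * (D^^n) g)"
    unfolding Lf_def by (metis mult.assoc)
  then show "Lf (m+n) (f*g) = Lf m f * Lf n g"
    unfolding Lf_def by (simp only: mult_ac)
qed

lemma Lf_pow: assumes "(D^^Suc m) f = 0"
  shows "(D^^Suc (k*m)) (f^k) = 0 \<and> Lf (k*m) (f^k) = (Lf m f)^k"
proof (induct k)
  case 0 then show ?case by (simp add: Lf_def)
next
  case (Suc k)
  have e: "Suc k * m = m + k * m" by simp
  show ?case unfolding e power_Suc using Lf_mult[OF assms, of "k*m" "f^k"] Suc by simp
qed

lemma Lf_lin: "lin (Lf m)"
  unfolding lin_def Lf_def by (simp add: iter_add iter_cmult distrib_left mult.left_commute)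

lemma Lf_zero_iff: "Lf m f = 0 \<longleftrightarrow> (D^^m) f = 0"
  by (simp add: Lf_def)

end

lemma coeff_dx: "coeff (dx f) j = pderiv (coeff f j)"
  by (simp add: dx_def coeff_map_poly)

lemma pderiv_sum': "pderiv (sum g A) = (\<Sum>x\<in>A. pderiv (g x))"
  by (induct A rule: infinite_finite_induct) (simp_all add: pderiv_add)

lemma const2_mult_smult: "const2 c * f = smult [:c:] f" by (simp add: const2_def)

lemma is_derivation_dx: "is_derivation (dx :: 'a::field_char_0 bipoly \<Rightarrow> _)"
  unfolding is_derivation_def
proof (intro conjI allI)
  fix f g :: "'a bipoly"
  show "dx (f + g) = dx f + dx g" by (rule poly_eqI) (simp add: coeff_dx pderiv_add)
  have "dx (f * g) = f * dx g + dx f * g"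
  proof (rule poly_eqI)
    fix n
    show "coeff (dx (f * g)) n = coeff (f * dx g + dx f * g) n"
      unfolding coeff_add coeff_mult coeff_dx pderiv_sum' pderiv_mult sum.distrib[symmetric]
      by (rule sum.cong) (simp_all add: mult.commute)
  qed
  then show "dx (f * g) = f * dx g + g * dx f" by (simp add: mult.commute)
next
  fix c and f :: "'a bipoly"
  show "dx (const2 c * f) = const2 c * dx f"
    by (rule poly_eqI) (simp add: coeff_dx const2_mult_smult pderiv_smult)
qed

lemma is_derivation_dy: "is_derivation (dy :: 'a::field_char_0 bipoly \<Rightarrow> _)"
  unfolding is_derivation_def dy_def
  by (simp add: pderiv_add pderiv_mult const2_mult_smult pderiv_smult)

lemma dx_X[simp]: "dx Xv = 1" by (simp add: dx_def Xv_def map_poly_pCons one_pCons pderiv_X)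
lemma dx_Y[simp]: "dx Yv = (0::'a::field_char_0 bipoly)" by (simp add: dx_def Yv_def map_poly_pCons one_pCons)
lemma dy_X[simp]: "dy Xv = 0" by (simp add: dy_def Xv_def)
lemma dy_Y[simp]: "dy Yv = 1"
  unfolding dy_def Yv_def by (rule pderiv_X)

definition der2 :: "'a::field_char_0 bipoly \<Rightarrow> 'a bipoly \<Rightarrow> 'a bipoly \<Rightarrow> 'a bipoly" where
  "der2 P Q f = dx f * P + dy f * Q"

lemma is_derivation_der2: "is_derivation (der2 P Q)"
  unfolding is_derivation_def der2_def
  by (simp add: der_add[OF is_derivation_dx] der_add[OF is_derivation_dy]
      der_mult[OF is_derivation_dx] der_mult[OF is_derivation_dy]
      der_cmult[OF is_derivation_dx] der_cmult[OF is_derivation_dy]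
      der_const2[OF is_derivation_dx] der_const2[OF is_derivation_dy] algebra_simps)

lemma der2_X[simp]: "der2 P Q Xv = P" and der2_Y[simp]: "der2 P Q Yv = Q"
  by (simp_all add: der2_def)

lemma der_ext: fixes D1 D2 :: "'a::field_char_0 bipoly \<Rightarrow> 'a bipoly"
  assumes "is_derivation D1" "is_derivation D2" "D1 Xv = D2 Xv" "D1 Yv = D2 Yv"
  shows "D1 f = D2 f"
proof (induct f rule: bipoly_induct)
  case (1 c) then show ?case by (simp add: der_const2[OF assms(1)] der_const2[OF assms(2)])
next
  case 2 then show ?case using assms by simp
next
  case 3 then show ?case using assms by simp
next
  case (4 f g) then show ?case by (simp add: der_add[OF assms(1)] der_add[OF assms(2)])
next
  case (5 f g) then show ?case by (simp add: der_mult[OF assms(1)] der_mult[OF assms(2)])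
qed

lemma chain_rule: "is_derivation D \<Longrightarrow> D = der2 (D Xv) (D Yv)"
  by (rule ext, rule der_ext) (simp_all add: is_derivation_der2)

lemma coeff_of_nat_mult: "coeff (of_nat n * p) i = of_nat n * coeff p i"
  by (simp add: of_nat_poly)

lemma cf_dx: "cf (dx f) i j = of_nat (Suc i) * cf f (Suc i) j"
  by (simp add: cf_def coeff_dx coeff_pderiv)
lemma cf_dy: "cf (dy f) i j = of_nat (Suc j) * cf f i (Suc j)"
  by (simp add: cf_def dy_def coeff_pderiv of_nat_poly del: of_nat_Suc)

definition degD :: "('a::field_char_0 bipoly \<Rightarrow> 'a bipoly) \<Rightarrow> 'a bipoly \<Rightarrow> nat" where
  "degD D f = (LEAST m. (D^^Suc m) f = 0)"

context fixes D :: "'a::field_char_0 bipoly \<Rightarrow> 'a bipoly" assumes lnd: "is_LND D"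
begin
lemma lnd_der: "is_derivation D" using lnd by (simp add: is_LND_def)

lemma degD_kill: "(D^^Suc (degD D f)) f = 0"
proof -
  obtain n where "(D^^n) f = 0" using lnd by (auto simp: is_LND_def)
  then have "(D^^Suc n) f = 0" using iter_mono[OF lnd_der, of n f "Suc n"] by simp
  then show ?thesis unfolding degD_def by (rule LeastI)
qed

lemma degD_le: "(D^^Suc n) f = 0 \<Longrightarrow> degD D f \<le> n"
  unfolding degD_def by (rule Least_le)

lemma degD_nz: assumes "f \<noteq> 0" shows "(D^^(degD D f)) f \<noteq> 0"
proof (cases "degD D f")
  case 0 then show ?thesis using assms by simp
next
  case (Suc k)
  then show ?thesis using degD_le[of k f] by auto
qed

lemma degD_iter_zero: "(D^^n) f = 0 \<longleftrightarrow> f = 0 \<or> degD D f < n"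
proof
  assume a: "(D^^n) f = 0"
  show "f = 0 \<or> degD D f < n"
  proof (rule ccontr)
    assume "\<not> (f = 0 \<or> degD D f < n)"
    then have f: "f \<noteq> 0" and le: "n \<le> degD D f" by auto
    have "(D^^(degD D f)) f = 0" by (rule iter_mono[OF lnd_der a le])
    then show False using degD_nz[OF f] by simp
  qed
next
  assume b: "f = 0 \<or> degD D f < n"
  show "(D^^n) f = 0"
  proof (cases "f = 0")
    case True then show ?thesis by (simp add: iter_0[OF lnd_der])
  next
    case False
    then have "Suc (degD D f) \<le> n" using b by simp
    then show ?thesis by (rule iter_mono[OF lnd_der degD_kill])
  qed
qed

lemma degD_mult: assumes "f \<noteq> 0" "g \<noteq> 0" shows "degD D (f*g) = degD D f + degD D g"
proof -
  note L = leib[OF lnd_der degD_kill degD_kill, of f g]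
  have "of_nat ((degD D f + degD D g) choose degD D f) \<noteq> (0::'a bipoly)" by simp
  then have "(D^^(degD D f + degD D g)) (f*g) \<noteq> 0" using L degD_nz assms by simp
  then show ?thesis using L degD_le degD_iter_zero by (meson antisym not_less)
qed

lemma degD_0[simp]: "degD D 0 = 0"
  using degD_le[of 0 0] der_0[OF lnd_der] by simp

lemma degD_zero_iff: "D f = 0 \<longleftrightarrow> degD D f = 0"
  using degD_iter_zero[of 1 f] der_0[OF lnd_der] by auto

lemma degD_D: "degD D (D f) = degD D f - 1"
proof (cases "D f = 0")
  case True then show ?thesis using degD_zero_iff[of f] degD_zero_iff[of 0] by simp
next
  case False
  then have f: "f \<noteq> 0" using der_0[OF lnd_der] by auto
  have "(D^^n) (D f) = 0 \<longleftrightarrow> (D^^Suc n) f = 0" for n by (simp add: iter_Suc'[OF lnd_der])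
  then have H: "degD D (D f) < n \<longleftrightarrow> degD D f < Suc n" for n using degD_iter_zero False f by metis
  have a: "degD D f < Suc (Suc (degD D (D f)))" using H[of "Suc (degD D (D f))"] by simp
  have b: "\<not> degD D f < Suc (degD D (D f))" using H[of "degD D (D f)"] by simp
  show ?thesis using a b by linarith
qed

lemma ker_factor: assumes "D (f*g) = 0" "f \<noteq> 0" "g \<noteq> 0" shows "D f = 0"
  using assms degD_mult degD_zero_iff by simp

end


definition wt :: "nat \<Rightarrow> nat \<Rightarrow> nat \<Rightarrow> nat \<Rightarrow> int" where "wt p q i j = int (p*i + q*j)"

definition wle :: "nat \<Rightarrow> nat \<Rightarrow> int \<Rightarrow> 'a::zero bipoly \<Rightarrow> bool" where
  "wle p q M f \<longleftrightarrow> (\<forall>i j. cf f i j \<noteq> 0 \<longrightarrow> wt p q i j \<le> M)"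

lemma wleD: "wle p q M f \<Longrightarrow> cf f i j \<noteq> 0 \<Longrightarrow> wt p q i j \<le> M"
  by (simp add: wle_def)
lemma wleI: "(\<And>i j. cf f i j \<noteq> 0 \<Longrightarrow> wt p q i j \<le> M) \<Longrightarrow> wle p q M f"
  by (simp add: wle_def)

definition mk :: "(nat \<Rightarrow> nat \<Rightarrow> 'a::zero) \<Rightarrow> 'a bipoly" where
  "mk F = Abs_poly (\<lambda>j. Abs_poly (\<lambda>i. F i j))"

lemma cf_mk: assumes "\<And>i j. F i j \<noteq> 0 \<Longrightarrow> i \<le> n \<and> j \<le> m" shows "cf (mk F) i j = F i j"
proof -
  have inner: "coeff (Abs_poly (\<lambda>i. F i j)) = (\<lambda>i. F i j)" for j
    by (rule coeff_Abs_poly[of n]) (use assms in force)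
  have z: "Abs_poly (\<lambda>i. F i j) = 0" if "j > m" for j
    by (rule poly_eqI) (use assms that inner in force)
  have outer: "coeff (Abs_poly (\<lambda>j. Abs_poly (\<lambda>i. F i j))) = (\<lambda>j. Abs_poly (\<lambda>i. F i j))"
    by (rule coeff_Abs_poly[of m]) (use z in auto)
  show ?thesis by (simp add: cf_def mk_def outer inner)
qed

definition hc :: "nat \<Rightarrow> nat \<Rightarrow> int \<Rightarrow> 'a::zero bipoly \<Rightarrow> 'a bipoly" where
  "hc p q M f = mk (\<lambda>i j. if wt p q i j = M then cf f i j else 0)"

lemma cf_hc: "cf (hc p q M f) i j = (if wt p q i j = M then cf f i j else 0)"
  unfolding hc_def
proof (rule cf_mk[of _ "bnd f" "degree f"])
  fix i j assume "(if wt p q i j = M then cf f i j else 0) \<noteq> 0"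
  then have "cf f i j \<noteq> 0" by (simp split: if_splits)
  then show "i \<le> bnd f \<and> j \<le> degree f" using cf_nz_bound by blast
qed

lemma hc_add[simp]: "hc p q M (f + g) = hc p q M f + hc p q M g"
  by (rule cf_eqI) (simp add: cf_hc)
lemma hc_diff[simp]: "hc p q M (f - g) = hc p q M f - hc p q M g"
  by (rule cf_eqI) (simp add: cf_hc)
lemma hc_cmult[simp]: "hc p q M (const2 c * f) = const2 c * hc p q M f"
  by (rule cf_eqI) (simp add: cf_hc)
lemma hc_0[simp]: "hc p q M 0 = 0"
  by (rule cf_eqI) (simp add: cf_hc)
lemma lin_hc: "lin (hc p q M)" by (simp add: lin_def)
lemma hc_hc[simp]: "hc p q M (hc p q M f) = hc p q M f"
  by (rule cf_eqI) (simp add: cf_hc)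

lemma wle_add: fixes f g :: "'a::field_char_0 bipoly" shows "wle p q M f \<Longrightarrow> wle p q M g \<Longrightarrow> wle p q M (f + g)"
  by (rule wleI) (case_tac "cf f i j = 0"; auto dest: wleD)
lemma wle_diff: fixes f g :: "'a::field_char_0 bipoly" shows "wle p q M f \<Longrightarrow> wle p q M g \<Longrightarrow> wle p q M (f - g)"
  by (rule wleI) (case_tac "cf f i j = 0"; auto dest: wleD)
lemma wle_cmult: fixes f :: "'a::field_char_0 bipoly" shows "wle p q M f \<Longrightarrow> wle p q M (const2 c * f)"
  by (rule wleI) (auto dest: wleD)
lemma wle_0[simp]: "wle p q M 0" by (simp add: wle_def)
lemma wle_mono: "wle p q M f \<Longrightarrow> M \<le> M' \<Longrightarrow> wle p q M' f"
  unfolding wle_def by force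
lemma wle_exists: "\<exists>M. wle p q M f"
proof -
  have "wt p q i j \<le> wt p q (bnd f) (degree f)" if "cf f i j \<noteq> 0" for i j
  proof -
    have "p*i + q*j \<le> p * bnd f + q * degree f"
      using cf_nz_bound[OF that] by (intro add_mono mult_le_mono2)
    then show ?thesis unfolding wt_def by (simp only: of_nat_le_iff)
  qed
  then show ?thesis unfolding wle_def by blast
qed
lemma wt_nonneg: "0 \<le> wt p q i j" by (simp add: wt_def)
lemma wle_neg: "wle p q M f \<Longrightarrow> M < 0 \<Longrightarrow> f = 0"
proof (rule cf_eqI, rule ccontr)
  fix i j assume "wle p q M f" "M < 0" "cf f i j \<noteq> cf 0 i j"
  then show False using wt_nonneg[of p q i j] wleD[of p q M f i j] by auto
qed
lemma wle_hc: "wle p q M (hc p q M f)" by (simp add: wle_def cf_hc)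
lemma wle_hc_drop: assumes "wle p q M f" "hc p q M f = 0" shows "wle p q (M - 1) f"
  unfolding wle_def
proof (intro allI impI)
  fix i j assume nz: "cf f i j \<noteq> 0"
  then have "wt p q i j \<le> M" using assms(1) by (simp add: wle_def)
  moreover have "wt p q i j \<noteq> M" using nz assms(2) cf_hc[of p q M f i j] by auto
  ultimately show "wt p q i j \<le> M - 1" by simp
qed
lemma wle_sub_hc: assumes "wle p q M f" shows "wle p q (M - 1) (f - hc p q M f)"
  unfolding wle_def
proof (intro allI impI)
  fix i j assume nz: "cf (f - hc p q M f) i j \<noteq> 0"
  then have "wt p q i j \<noteq> M" by (auto simp: cf_hc)
  moreover have "cf f i j \<noteq> 0" using nz by (auto simp: cf_hc split: if_splits)
  then have "wt p q i j \<le> M" using assms by (simp add: wle_def)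
  ultimately show "wt p q i j \<le> M - 1" by simp
qed

definition whom :: "nat \<Rightarrow> nat \<Rightarrow> int \<Rightarrow> 'a::zero bipoly \<Rightarrow> bool" where
  "whom p q M f \<longleftrightarrow> hc p q M f = f"

lemma whom_iff: "whom p q M f \<longleftrightarrow> (\<forall>i j. cf f i j \<noteq> 0 \<longrightarrow> wt p q i j = M)"
proof
  assume h: "whom p q M f"
  show "\<forall>i j. cf f i j \<noteq> 0 \<longrightarrow> wt p q i j = M"
  proof (intro allI impI, rule ccontr)
    fix i j assume "cf f i j \<noteq> 0" "wt p q i j \<noteq> M"
    then show False using h cf_hc[of p q M f i j] by (simp add: whom_def)
  qed
next
  assume h: "\<forall>i j. cf f i j \<noteq> 0 \<longrightarrow> wt p q i j = M"
  show "whom p q M f" unfolding whom_def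
    by (rule cf_eqI) (use h in \<open>auto simp: cf_hc\<close>)
qed
lemma whom_wle: "whom p q M f \<Longrightarrow> wle p q M f"
  by (simp add: whom_iff wle_def)
lemma whom_hc: "whom p q M (hc p q M f)" by (simp add: whom_def)
lemma whom_0[simp]: "whom p q M 0" by (simp add: whom_def)

lemma wt_split: assumes "i1 \<le> i" "j1 \<le> j" shows "wt p q i j = wt p q i1 j1 + wt p q (i - i1) (j - j1)"
proof -
  obtain a where a: "i = i1 + a" using le_Suc_ex[OF assms(1)] by blast
  obtain b where b: "j = j1 + b" using le_Suc_ex[OF assms(2)] by blast
  note ab = a b
  have e: "p*i + q*j = (p*i1 + q*j1) + (p*a + q*b)" unfolding ab by (simp add: distrib_left)
  have "i - i1 = a" "j - j1 = b" using ab by simp_all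
  then show ?thesis unfolding wt_def e by (simp only: of_nat_add)
qed

lemma sum_nz_ex: assumes "sum g A \<noteq> 0" shows "\<exists>x\<in>A. g x \<noteq> 0"
proof (rule ccontr)
  assume "\<not> (\<exists>x\<in>A. g x \<noteq> 0)"
  then have "\<forall>x\<in>A. g x = 0" by blast
  then have "sum g A = 0" by (rule sum.neutral)
  then show False using assms by simp
qed

lemma wle_mult: fixes f g :: "'a::field_char_0 bipoly" assumes f: "wle p q M1 f" and g: "wle p q M2 g"
  shows "wle p q (M1 + M2) (f * g)" "hc p q (M1 + M2) (f * g) = hc p q M1 f * hc p q M2 g"
proof -
  show "wle p q (M1 + M2) (f * g)"
    unfolding wle_def
  proof (intro allI impI)
    fix i j assume "cf (f * g) i j \<noteq> 0"
    then obtain j1 i1 where j1: "j1 \<le> j" and i1: "i1 \<le> i" and nz: "cf f i1 j1 * cf g (i - i1) (j - j1) \<noteq> 0"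
      unfolding cf_mult by (auto dest!: sum_nz_ex)
    then have "wt p q i1 j1 \<le> M1" "wt p q (i - i1) (j - j1) \<le> M2"
      using wleD[OF f, of i1 j1] wleD[OF g, of "i - i1" "j - j1"] nz by auto
    then show "wt p q i j \<le> M1 + M2" using wt_split[OF i1 j1, of p q] by simp
  qed
  show "hc p q (M1 + M2) (f * g) = hc p q M1 f * hc p q M2 g"
  proof (rule cf_eqI)
    fix i j
    have tm: "(if wt p q i1 j1 = M1 then cf f i1 j1 else 0) * (if wt p q (i - i1) (j - j1) = M2 then cf g (i - i1) (j - j1) else 0)
       = (if wt p q i j = M1 + M2 then cf f i1 j1 * cf g (i - i1) (j - j1) else 0)"
      if "i1 \<le> i" "j1 \<le> j" for i1 j1
    proof (cases "cf f i1 j1 * cf g (i - i1) (j - j1) = 0")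
      case True then show ?thesis by auto
    next
      case False
      then have "wt p q i1 j1 \<le> M1" "wt p q (i - i1) (j - j1) \<le> M2"
        using wleD[OF f, of i1 j1] wleD[OF g, of "i - i1" "j - j1"] False by auto
      then show ?thesis using wt_split[OF that, of p q] by auto
    qed
    show "cf (hc p q (M1 + M2) (f * g)) i j = cf (hc p q M1 f * hc p q M2 g) i j"
      unfolding cf_hc cf_mult using tm
      by (auto intro!: sum.cong simp: sum.neutral)
  qed
qed

lemma whom_mult: fixes f g :: "'a::field_char_0 bipoly" shows "whom p q M1 f \<Longrightarrow> whom p q M2 g \<Longrightarrow> whom p q (M1 + M2) (f * g)"
  using wle_mult[OF whom_wle whom_wle, of p q M1 f M2 g] unfolding whom_def by simp

lemma wt_Suc_i: "wt p q (Suc i) j = wt p q i j + int p" by (simp add: wt_def)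
lemma wt_Suc_j: "wt p q i (Suc j) = wt p q i j + int q" by (simp add: wt_def)

lemma wle_dx: assumes "wle p q M f"
  shows "wle p q (M - int p) (dx f)" "hc p q (M - int p) (dx f) = dx (hc p q M f)"
proof -
  show "wle p q (M - int p) (dx f)"
    by (rule wleI) (use wleD[OF assms] in \<open>force simp: cf_dx wt_Suc_i\<close>)
  show "hc p q (M - int p) (dx f) = dx (hc p q M f)"
    by (rule cf_eqI) (auto simp: cf_dx cf_hc wt_Suc_i)
qed

lemma wle_dy: assumes "wle p q M f"
  shows "wle p q (M - int q) (dy f)" "hc p q (M - int q) (dy f) = dy (hc p q M f)"
proof -
  show "wle p q (M - int q) (dy f)"
    by (rule wleI) (use wleD[OF assms] in \<open>force simp: cf_dy wt_Suc_j\<close>)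
  show "hc p q (M - int q) (dy f) = dy (hc p q M f)"
    by (rule cf_eqI) (auto simp: cf_dy cf_hc wt_Suc_j)
qed

lemma wle_der2:
  assumes P: "wle p q (int p + e) P" and Q: "wle p q (int q + e) Q" and f: "wle p q M f"
  shows "wle p q (M + e) (der2 P Q f)"
    "hc p q (M + e) (der2 P Q f) = der2 (hc p q (int p + e) P) (hc p q (int q + e) Q) (hc p q M f)"
proof -
  have e1: "M + e = (M - int p) + (int p + e)" "M + e = (M - int q) + (int q + e)" by simp_all
  note a = wle_mult[OF wle_dx(1)[OF f] P] and b = wle_mult[OF wle_dy(1)[OF f] Q]
  show "wle p q (M + e) (der2 P Q f)"
    unfolding der2_def by (rule wle_add) (subst e1(1), rule a(1), subst e1(2), rule b(1))
  show "hc p q (M + e) (der2 P Q f) = der2 (hc p q (int p + e) P) (hc p q (int q + e) Q) (hc p q M f)"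
    unfolding der2_def hc_add by (subst e1(1), subst a(2), subst e1(2), subst b(2))
       (simp add: wle_dx(2)[OF f] wle_dy(2)[OF f])
qed

lemma wle_der2_iter:
  assumes P: "wle p q (int p + e) P" and Q: "wle p q (int q + e) Q" and f: "wle p q M f"
  shows "wle p q (M + int n * e) ((der2 P Q ^^ n) f) \<and>
    hc p q (M + int n * e) ((der2 P Q ^^ n) f) = (der2 (hc p q (int p + e) P) (hc p q (int q + e) Q) ^^ n) (hc p q M f)"
proof (induct n)
  case 0 then show ?case using f by simp
next
  case (Suc n)
  have e: "M + int (Suc n) * e = (M + int n * e) + e" by (simp add: algebra_simps)
  show ?case unfolding e iter_Suc using wle_der2[OF P Q Suc[THEN conjunct1]] Suc[THEN conjunct2] by simp
qed

lemma nil_sum: fixes D :: "'a::field_char_0 bipoly \<Rightarrow> 'a bipoly" assumes "is_derivation D" "finite A" "\<And>x. x \<in> A \<Longrightarrow> \<exists>n. (D^^n) (g x) = 0"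
  shows "\<exists>n. (D^^n) (sum g A) = 0"
  using assms(2,3)
proof (induct A rule: finite_induct)
  case empty then show ?case by (auto intro: exI[of _ 0])
next
  case (insert x A)
  obtain n1 where n1: "(D^^n1) (g x) = 0" using insert by auto
  obtain n2 where n2: "(D^^n2) (sum g A) = 0" using insert by auto
  have a: "(D^^max n1 n2) (g x) = 0" "(D^^max n1 n2) (sum g A) = 0"
    using iter_mono[OF assms(1) n1] iter_mono[OF assms(1) n2] by auto
  show ?case using a insert.hyps by (intro exI[of _ "max n1 n2"]) (simp add: iter_add[OF assms(1)])
qed

lemma lnd_from_monomials: fixes D :: "'a::field_char_0 bipoly \<Rightarrow> 'a bipoly" assumes "is_derivation D" "\<And>i j. \<exists>n. (D^^n) (Xv^i * Yv^j) = 0"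
  shows "is_LND D"
  unfolding is_LND_def
proof (intro conjI allI assms(1))
  fix f
  show "\<exists>n. (D^^n) f = 0"
    by (subst supp_decomp, rule nil_sum[OF assms(1) finite_supp])
      (auto simp: mon_def iter_cmult[OF assms(1)] mult.assoc assms(2))
qed

lemma whom_mon: "whom p q (wt p q i j) (Xv^i * Yv^j)"
proof -
  have e: "Xv^i * Yv^j = mon 1 i j" by (simp add: mon_def)
  show ?thesis unfolding whom_iff e cf_mon by auto
qed

lemma gr_LND:
  assumes D: "is_LND (der2 P Q)" and P: "wle p q (int p + e) P" and Q: "wle p q (int q + e) Q"
  shows "is_LND (der2 (hc p q (int p + e) P) (hc p q (int q + e) Q))"
proof (rule lnd_from_monomials[OF is_derivation_der2])
  fix i j
  let ?m = "Xv^i * Yv^j :: 'a bipoly"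
  have hw: "whom p q (wt p q i j) ?m" by (rule whom_mon)
  note w = whom_wle[OF hw] and h = hw[unfolded whom_def]
  obtain n where "((der2 P Q)^^n) ?m = 0" using D by (auto simp: is_LND_def)
  then show "\<exists>n. (der2 (hc p q (int p + e) P) (hc p q (int q + e) Q) ^^ n) ?m = 0"
    using wle_der2_iter[OF P Q w, of n] h by auto
qed

lemma whom_der2:
  assumes A: "whom p q (int p + e) A" and B: "whom p q (int q + e) B" and f: "whom p q M f"
  shows "whom p q (M + e) (der2 A B f)"
  using wle_der2[OF whom_wle[OF A] whom_wle[OF B] whom_wle[OF f]] A B f unfolding whom_def by simp

lemma whom_der2_iter:
  assumes A: "whom p q (int p + e) A" and B: "whom p q (int q + e) B" and f: "whom p q M f"
  shows "whom p q (M + int n * e) ((der2 A B ^^ n) f)"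
proof (induct n)
  case 0 then show ?case using f by simp
next
  case (Suc n)
  have e: "M + int (Suc n) * e = (M + int n * e) + e" by (simp add: algebra_simps)
  show ?case unfolding e iter_Suc by (rule whom_der2[OF A B Suc])
qed


lemma map_poly_add_hom: assumes "h 0 = 0" "\<And>a b. h (a+b) = h a + h b"
  shows "map_poly h (p + q) = map_poly h p + map_poly h q"
  by (rule poly_eqI) (simp add: coeff_map_poly assms)

lemma map_poly_mult_hom:
  fixes h :: "'a::comm_semiring_0 \<Rightarrow> 'b::comm_semiring_0"
  assumes h0: "h 0 = 0" and ha: "\<And>a b. h (a+b) = h a + h b" and hm: "\<And>a b. h (a*b) = h a * h b"
  shows "map_poly h (p * q) = map_poly h p * map_poly h q"
proof (induct p rule: pCons_induct)
  case 0 then show ?case by simp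
next
  case (pCons a p)
  have "map_poly h (pCons a p * q) = map_poly h (smult a q + pCons 0 (p * q))" by simp
  also have "\<dots> = smult (h a) (map_poly h q) + pCons 0 (map_poly h p * map_poly h q)"
    by (simp add: map_poly_add_hom[OF h0 ha] map_poly_smult h0 hm map_poly_pCons pCons.hyps)
  also have "\<dots> = map_poly h (pCons a p) * map_poly h q" by (simp add: map_poly_pCons h0)
  finally show ?case .
qed

definition hxs :: "'a::field_char_0 bipoly \<Rightarrow> 'a poly \<Rightarrow> 'a bipoly" where
  "hxs U c = poly (map_poly const2 c) U"
definition subst :: "'a::field_char_0 bipoly \<Rightarrow> 'a bipoly \<Rightarrow> 'a bipoly \<Rightarrow> 'a bipoly" where
  "subst U V f = poly (map_poly (hxs U) f) V"

lemma hxs_0[simp]: "hxs U 0 = 0" by (simp add: hxs_def)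
lemma hxs_add: "hxs U (a + b) = hxs U a + hxs U b"
  by (simp add: hxs_def map_poly_add_hom const2_add)
lemma hxs_mult: "hxs U (a * b) = hxs U a * hxs U b"
  by (simp add: hxs_def map_poly_mult_hom const2_add const2_mult)
lemma hxs_1[simp]: "hxs U 1 = 1" by (simp add: hxs_def map_poly_1)

lemma subst_add: "subst U V (f + g) = subst U V f + subst U V g"
  by (simp add: subst_def map_poly_add_hom hxs_add)
lemma subst_mult: "subst U V (f * g) = subst U V f * subst U V g"
  by (simp add: subst_def map_poly_mult_hom hxs_add hxs_mult)
lemma subst_0[simp]: "subst U V 0 = 0" by (simp add: subst_def)
lemma subst_1[simp]: "subst U V 1 = 1" by (simp add: subst_def map_poly_1)
lemma subst_const2[simp]: "subst U V (const2 c) = const2 c"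
  by (simp add: subst_def const2_def hxs_def map_poly_pCons)
lemma subst_X[simp]: "subst U V Xv = U"
  by (simp add: subst_def Xv_def hxs_def map_poly_pCons one_pCons[symmetric])
lemma subst_Y[simp]: "subst U V Yv = V"
  by (simp add: subst_def Yv_def map_poly_pCons one_pCons[symmetric])
lemma subst_pow: "subst U V (f ^ n) = subst U V f ^ n"
  by (induct n) (simp_all add: subst_mult)
lemma subst_uminus: "subst U V (- f) = - subst U V f"
  using subst_add[of U V f "-f"] by (simp add: add_eq_0_iff)
lemma subst_diff: "subst U V (f - g) = subst U V f - subst U V g"
  using subst_add[of U V f "-g"] subst_uminus[of U V g] by simp
lemma subst_cmult: "subst U V (const2 c * f) = const2 c * subst U V f"
  by (simp add: subst_mult)
lemma lin_subst: "lin (subst U V)" by (simp add: lin_def subst_add subst_cmult)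
lemma subst_sum: "subst U V (sum g A) = (\<Sum>x\<in>A. subst U V (g x))"
  by (rule lin_sum[OF lin_subst])
lemma subst_mon: "subst U V (Xv^i * Yv^j) = U^i * V^j"
  by (simp add: subst_mult subst_pow)

definition rhom :: "('a::field_char_0 bipoly \<Rightarrow> 'a bipoly) \<Rightarrow> bool" where
  "rhom \<phi> \<longleftrightarrow> (\<forall>f g. \<phi> (f + g) = \<phi> f + \<phi> g) \<and> (\<forall>f g. \<phi> (f * g) = \<phi> f * \<phi> g) \<and> (\<forall>c. \<phi> (const2 c) = const2 c)"

lemma rhom_subst: "rhom (subst U V)" by (simp add: rhom_def subst_add subst_mult)

lemma rhom_ext: assumes "rhom \<phi>" "rhom \<psi>" "\<phi> Xv = \<psi> Xv" "\<phi> Yv = \<psi> Yv" shows "\<phi> f = \<psi> f"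
  by (induct f rule: bipoly_induct) (use assms in \<open>simp_all add: rhom_def\<close>)

lemma rhom_0: "rhom \<phi> \<Longrightarrow> \<phi> 0 = 0" using const2_0 by (metis rhom_def)
lemma rhom_1: "rhom \<phi> \<Longrightarrow> \<phi> 1 = 1" using const2_1 by (metis rhom_def)
lemma rhom_add: "rhom \<phi> \<Longrightarrow> \<phi> (f + g) = \<phi> f + \<phi> g" by (simp add: rhom_def)
lemma rhom_mult: "rhom \<phi> \<Longrightarrow> \<phi> (f * g) = \<phi> f * \<phi> g" by (simp add: rhom_def)
lemma rhom_const2: "rhom \<phi> \<Longrightarrow> \<phi> (const2 c) = const2 c" by (simp add: rhom_def)
lemma rhom_pow: "rhom \<phi> \<Longrightarrow> \<phi> (f ^ n) = \<phi> f ^ n"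
  by (induct n) (simp_all add: rhom_1 rhom_mult)
lemma rhom_uminus: "rhom \<phi> \<Longrightarrow> \<phi> (- f) = - \<phi> f"
  using rhom_add[of \<phi> f "-f"] rhom_0[of \<phi>] by (simp add: add_eq_0_iff)
lemma rhom_diff: "rhom \<phi> \<Longrightarrow> \<phi> (f - g) = \<phi> f - \<phi> g"
  using rhom_add[of \<phi> f "-g"] rhom_uminus[of \<phi> g] by simp
lemma rhom_comp: "rhom \<phi> \<Longrightarrow> rhom \<psi> \<Longrightarrow> rhom (\<phi> \<circ> \<psi>)" by (simp add: rhom_def)
lemma rhom_id: "rhom id" by (simp add: rhom_def)

lemma unit_bipoly: assumes "is_unit (h :: 'a::field_char_0 bipoly)" shows "\<exists>a. a \<noteq> 0 \<and> h = const2 a"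
proof -
  obtain c where c: "h = [:c:]" "c dvd 1" using assms is_unit_poly_iff by blast
  obtain a where a: "c = [:a:]" "a dvd 1" using c(2) is_unit_poly_iff by blast
  have "a \<noteq> 0" using a(2) by auto
  then show ?thesis using c a by (auto simp: const2_def)
qed

lemma unit_const2: "(a::'a::field_char_0) \<noteq> 0 \<Longrightarrow> is_unit (const2 a)"
  by (simp add: const2_def is_unit_poly_iff dvd_field_iff)

lemma Y_dvd_iff: "Yv dvd (f :: 'a::field_char_0 bipoly) \<longleftrightarrow> (\<forall>i. cf f i 0 = 0)"
proof
  assume "Yv dvd f"
  then obtain g where "f = Yv * g" by (elim dvdE)
  then show "\<forall>i. cf f i 0 = 0" by (simp add: cf_Ymult)
next
  assume a: "\<forall>i. cf f i 0 = 0"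
  obtain c g where f: "f = pCons c g" by (cases f)
  have "c = 0" using a f by (intro poly_eqI) (simp add: cf_def)
  then have "f = Yv * g" using f by (simp add: Yv_def)
  then show "Yv dvd f" by simp
qed

definition ev0 :: "'a::field_char_0 bipoly \<Rightarrow> 'a poly" where
  "ev0 f = map_poly (\<lambda>c. poly c 0) f"

lemma ev0_mult: "ev0 (f * g) = ev0 f * ev0 g"
  unfolding ev0_def by (rule map_poly_mult_hom) simp_all

lemma coeff_ev0: "coeff (ev0 f) j = cf f 0 j"
  by (simp add: ev0_def coeff_map_poly cf_def poly_0_coeff_0)

lemma X_dvd_iff: "Xv dvd (f :: 'a::field_char_0 bipoly) \<longleftrightarrow> (\<forall>j. cf f 0 j = 0)"
proof
  assume "Xv dvd f"
  then obtain g where "f = Xv * g" by (elim dvdE)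
  then show "\<forall>j. cf f 0 j = 0" by (simp add: cf_Xmult)
next
  assume a: "\<forall>j. cf f 0 j = 0"
  let ?g = "map_poly (\<lambda>c. c div [:0,1:]) f"
  have d: "[:0,1:] dvd coeff f j" for j
    using a by (simp add: cf_def dvd_iff_poly_eq_0 poly_0_coeff_0)
  have "Xv * ?g = f"
  proof (rule poly_eqI)
    fix j
    have "Xv * ?g = smult [:0,1:] ?g" by (simp add: Xv_def)
    have "[:0,1:] * (coeff f j div [:0,1:]) = coeff f j" by (rule dvd_mult_div_cancel[OF d])
    then show "coeff (Xv * ?g) j = coeff f j" using \<open>Xv * ?g = _\<close> by (simp add: coeff_map_poly)
  qed
  then show "Xv dvd f" by (metis dvdI)
qed

lemma X_dvd_iff_ev0: "Xv dvd (f :: 'a::field_char_0 bipoly) \<longleftrightarrow> ev0 f = 0"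
  unfolding X_dvd_iff by (simp add: poly_eq_iff coeff_ev0)

lemma Y_prime: "Yv dvd (f * g :: 'a::field_char_0 bipoly) \<Longrightarrow> Yv dvd f \<or> Yv dvd g"
proof -
  have yd: "Yv dvd h \<longleftrightarrow> coeff h 0 = 0" for h :: "'a bipoly"
    unfolding Y_dvd_iff by (simp add: cf_def poly_eq_iff)
  show "Yv dvd (f * g) \<Longrightarrow> Yv dvd f \<or> Yv dvd g" unfolding yd by (simp add: coeff_mult_0)
qed

lemma X_prime: "Xv dvd (f * g :: 'a::field_char_0 bipoly) \<Longrightarrow> Xv dvd f \<or> Xv dvd g"
  unfolding X_dvd_iff_ev0 by (simp add: ev0_mult)

lemma X_nz[simp]: "Xv \<noteq> (0::'a::field_char_0 bipoly)" by (simp add: Xv_def)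
lemma Y_nz[simp]: "Yv \<noteq> (0::'a::field_char_0 bipoly)" by (simp add: Yv_def)


lemma hc_other: "whom p q M f \<Longrightarrow> M \<noteq> M' \<Longrightarrow> hc p q M' f = 0"
  by (rule cf_eqI) (auto simp: cf_hc whom_iff)

lemma lin_zero: "lin (\<lambda>_. 0)" by (simp add: lin_def)
lemma lin_comp: "lin S \<Longrightarrow> lin T \<Longrightarrow> lin (S \<circ> T)" by (simp add: lin_def)

context fixes D :: "'a::field_char_0 bipoly \<Rightarrow> 'a bipoly" and g p q :: nat
  assumes lnd: "is_LND D" and g1: "1 \<le> g"
  and kx: "(D^^Suc (g*p)) Xv = 0" and ky: "(D^^Suc (g*q)) Yv = 0"
begin

lemma link_mon: "(D^^Suc (g*(p*i+q*j))) (Xv^i*Yv^j) = 0 \<and>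
   Lf D (g*(p*i+q*j)) (Xv^i*Yv^j) = Lf D (g*p) Xv ^ i * Lf D (g*q) Yv ^ j"
proof -
  note der = lnd_der[OF lnd]
  have a: "(D^^Suc (i*(g*p))) (Xv^i) = 0 \<and> Lf D (i*(g*p)) (Xv^i) = (Lf D (g*p) Xv)^i"
    by (rule Lf_pow[OF der kx])
  have b: "(D^^Suc (j*(g*q))) (Yv^j) = 0 \<and> Lf D (j*(g*q)) (Yv^j) = (Lf D (g*q) Yv)^j"
    by (rule Lf_pow[OF der ky])
  have e: "g*(p*i+q*j) = i*(g*p) + j*(g*q)" by (simp add: algebra_simps)
  show ?thesis unfolding e using Lf_mult[OF der a[THEN conjunct1] b[THEN conjunct1]] a b by simp
qed

lemma link_kill: assumes "wle p q (int N) F" shows "(D^^Suc (g*N)) F = 0"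
proof -
  have "(D^^Suc (g*N)) F = (\<lambda>_. 0) F"
  proof (rule lin_eqI[OF lin_iter[OF lnd_der[OF lnd]] lin_zero])
    fix i j assume "cf F i j \<noteq> 0"
    then have "wt p q i j \<le> int N" using assms by (rule wleD[rotated])
    then have "p*i + q*j \<le> N" by (simp only: wt_def of_nat_le_iff)
    then have "Suc (g*(p*i+q*j)) \<le> Suc (g*N)" by simp
    then show "(D^^Suc (g*N)) (Xv^i * Yv^j) = 0"
      using iter_mono[OF lnd_der[OF lnd]] link_mon[of i j] by blast
  qed
  then show ?thesis by simp
qed

lemma link_top: assumes "wle p q (int N) F"
  shows "Lf D (g*N) F = subst (Lf D (g*p) Xv) (Lf D (g*q) Yv) (hc p q (int N) F)"
proof -
  let ?T = "subst (Lf D (g*p) Xv) (Lf D (g*q) Yv) \<circ> hc p q (int N)"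
  have "Lf D (g*N) F = ?T F"
  proof (rule lin_eqI[OF Lf_lin[OF lnd_der[OF lnd]] lin_comp[OF lin_subst lin_hc]])
    fix i j assume "cf F i j \<noteq> 0"
    then have "wt p q i j \<le> int N" using assms by (rule wleD[rotated])
    then have le: "p*i + q*j \<le> N" by (simp only: wt_def of_nat_le_iff)
    have wm: "whom p q (wt p q i j) (Xv^i * Yv^j :: 'a bipoly)" by (rule whom_mon)
    show "Lf D (g*N) (Xv^i * Yv^j) = ?T (Xv^i * Yv^j)"
    proof (cases "p*i + q*j = N")
      case True
      then have w: "wt p q i j = int N" by (simp add: wt_def)
      have "hc p q (int N) (Xv^i * Yv^j) = (Xv^i * Yv^j :: 'a bipoly)"
        using wm unfolding whom_def w .
      then show ?thesis using link_mon[of i j] True by (simp add: subst_mon)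
    next
      case False
      then have lt: "p*i + q*j < N" using le by simp
      have "hc p q (int N) (Xv^i * Yv^j :: 'a bipoly) = 0"
        by (rule hc_other[OF wm]) (use False in \<open>simp only: wt_def of_nat_eq_iff not_False_eq_True\<close>)
      moreover have "Suc (g*(p*i+q*j)) \<le> g*N"
      proof -
        have "p*i+q*j + 1 \<le> N" using lt by simp
        then have "g*(p*i+q*j + 1) \<le> g*N" by (rule mult_le_mono2)
        then have "g*(p*i+q*j) + g \<le> g*N" by (simp add: distrib_left)
        then show ?thesis using g1 by linarith
      qed
      then have "(D^^(g*N)) (Xv^i * Yv^j :: 'a bipoly) = 0"
        using iter_mono[OF lnd_der[OF lnd]] link_mon[of i j] by blast
      ultimately show ?thesis by (simp add: Lf_zero_iff[OF lnd_der[OF lnd]])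
    qed
  qed
  then show ?thesis by simp
qed

end

definition ev2 :: "'a::field_char_0 bipoly \<Rightarrow> 'a \<Rightarrow> 'a \<Rightarrow> 'a" where
  "ev2 f a b = poly (map_poly (\<lambda>c. poly c a) f) b"

lemma ev2_add: "ev2 (f + g) a b = ev2 f a b + ev2 g a b"
  by (simp add: ev2_def map_poly_add_hom)
lemma ev2_mult: "ev2 (f * g) a b = ev2 f a b * ev2 g a b"
  by (simp add: ev2_def map_poly_mult_hom)
lemma ev2_0[simp]: "ev2 0 a b = 0" by (simp add: ev2_def)
lemma ev2_1[simp]: "ev2 1 a b = 1" by (simp add: ev2_def map_poly_1)
lemma ev2_const2[simp]: "ev2 (const2 c) a b = c" by (simp add: ev2_def const2_def map_poly_pCons)
lemma ev2_pow: "ev2 (f ^ n) a b = ev2 f a b ^ n" by (induct n) (simp_all add: ev2_mult)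
lemma ev2_uminus: "ev2 (- f) a b = - ev2 f a b"
  using ev2_add[of f "-f" a b] by (simp add: add_eq_0_iff)
lemma ev2_diff: "ev2 (f - g) a b = ev2 f a b - ev2 g a b"
  using ev2_add[of f "-g" a b] ev2_uminus[of g a b] by simp
lemma ev2_sum: "ev2 (sum g A) a b = (\<Sum>x\<in>A. ev2 (g x) a b)"
  by (induct A rule: infinite_finite_induct) (simp_all add: ev2_add)
lemma ev2_prod: "ev2 (prod g A) a b = (\<Prod>x\<in>A. ev2 (g x) a b)"
  by (induct A rule: infinite_finite_induct) (simp_all add: ev2_mult)

lemma ev2_zero: assumes "\<And>a b. ev2 f a b = 0" shows "f = 0"
proof -
  have m: "map_poly (\<lambda>c. poly c a) f = 0" for a
    by (subst poly_all_0_iff_0[symmetric]) (use assms[unfolded ev2_def] in auto)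
  have "poly (coeff f j) a = 0" for a j
    using arg_cong[OF m[of a], of "\<lambda>p. coeff p j"] by (simp add: coeff_map_poly)
  then have "coeff f j = 0" for j
    by (subst poly_all_0_iff_0[symmetric]) auto
  then show ?thesis by (simp add: poly_eq_iff)
qed

lemma homrel:
  fixes p q :: "'a::field_char_0 bipoly" and c :: "nat \<Rightarrow> 'a"
  assumes q0: "q \<noteq> 0"
    and S: "(\<Sum>i\<le>I. const2 (c i) * p^i * q^(I - i)) = 0" and ex: "\<exists>i\<le>I. c i \<noteq> 0"
  shows "\<exists>c0. p = const2 c0 * q"
proof -
  define \<phi> where "\<phi> = (\<Sum>i\<le>I. monom (c i) i)"
  have cphi: "coeff \<phi> i = (if i \<le> I then c i else 0)" for i
    unfolding \<phi>_def coeff_sum by (simp add: coeff_monom)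
  obtain i0 where i0: "i0 \<le> I" "c i0 \<noteq> 0" using ex by blast
  then have "coeff \<phi> i0 \<noteq> 0" using cphi by simp
  then have phi0: "\<phi> \<noteq> 0" by auto
  define R where "R = {t. poly \<phi> t = 0}"
  have fR: "finite R" unfolding R_def using poly_roots_finite[OF phi0] .
  define G where "G = q * (\<Prod>r\<in>R. p - const2 r * q)"
  have "ev2 G a b = 0" for a b
  proof -
    define P where "P = ev2 p a b"
    define Q where "Q = ev2 q a b"
    show ?thesis
    proof (cases "Q = 0")
      case True then show ?thesis by (simp add: G_def ev2_mult Q_def)
    next
      case False
      have "(\<Sum>i\<le>I. c i * P^i * Q^(I - i)) = 0"
        using arg_cong[OF S, of "\<lambda>f. ev2 f a b"] by (simp add: ev2_sum ev2_mult ev2_pow P_def Q_def)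
      moreover have "c i * P^i * Q^(I - i) = Q^I * (c i * (P/Q)^i)" if "i \<le> I" for i
      proof -
        have "Q^I = Q^i * Q^(I - i)" using that by (simp add: power_add[symmetric])
        then show ?thesis using False by (simp add: power_divide field_simps)
      qed
      ultimately have "Q^I * (\<Sum>i\<le>I. c i * (P/Q)^i) = 0"
        by (simp add: sum_distrib_left)
      then have "(\<Sum>i\<le>I. c i * (P/Q)^i) = 0" using False by simp
      moreover have "poly \<phi> (P/Q) = (\<Sum>i\<le>I. c i * (P/Q)^i)"
        unfolding \<phi>_def by (simp add: poly_sum poly_monom)
      ultimately have "P/Q \<in> R" by (simp add: R_def)
      moreover have "ev2 (p - const2 (P/Q) * q) a b = 0"
        using False by (simp add: ev2_diff ev2_mult P_def Q_def)
      ultimately have "\<exists>r\<in>R. ev2 (p - const2 r * q) a b = 0" by blast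
      then have "(\<Prod>r\<in>R. ev2 (p - const2 r * q) a b) = 0"
        using fR by (simp add: prod_zero_iff)
      then show ?thesis by (simp add: G_def ev2_mult ev2_prod)
    qed
  qed
  then have "G = 0" by (rule ev2_zero)
  then have "(\<Prod>r\<in>R. p - const2 r * q) = 0" using q0 by (simp add: G_def)
  then obtain r where "p - const2 r * q = 0" using fR by (auto simp: prod_zero_iff)
  then show ?thesis by auto
qed


lemma X_mon: "Xv = mon (1::'a::comm_ring_1) 1 0" by (simp add: mon_def)
lemma Y_mon: "Yv = mon (1::'a::comm_ring_1) 0 1" by (simp add: mon_def)
lemma cf_X: "cf (Xv::'a::comm_ring_1 bipoly) i j = (if i = 1 \<and> j = 0 then 1 else 0)"
  by (simp add: X_mon cf_mon)
lemma cf_Y: "cf (Yv::'a::comm_ring_1 bipoly) i j = (if i = 0 \<and> j = 1 then 1 else 0)"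
  by (simp add: Y_mon cf_mon)
lemma whom_X: "whom p q (int p) (Xv :: 'a::field_char_0 bipoly)"
  by (simp add: whom_iff cf_X wt_def)
lemma whom_Y: "whom p q (int q) (Yv :: 'a::field_char_0 bipoly)"
  by (simp add: whom_iff cf_Y wt_def)

lemma whomD: "whom p q M f \<Longrightarrow> cf f i j \<noteq> 0 \<Longrightarrow> int (p*i + q*j) = M"
  unfolding whom_iff wt_def by blast

lemma exists_top:
  fixes P Q :: "'a::field_char_0 bipoly"
  assumes nz: "P \<noteq> 0 \<or> Q \<noteq> 0"
  shows "\<exists>e. wle p q (int p + e) P \<and> wle p q (int q + e) Q \<and> (hc p q (int p + e) P \<noteq> 0 \<or> hc p q (int q + e) Q \<noteq> 0)"
proof -
  obtain M1 where M1: "wle p q M1 P" using wle_exists by blast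
  obtain M2 where M2: "wle p q M2 Q" using wle_exists by blast
  define E0 where "E0 = max (M1 - int p) (M2 - int q)"
  define S where "S = {n::nat. wle p q (int p + (E0 - int n)) P \<and> wle p q (int q + (E0 - int n)) Q}"
  have "0 \<in> S" unfolding S_def E0_def using M1 M2 by (auto elim: wle_mono)
  define B where "B = nat (E0 + int p + int q)"
  have bound: "n \<le> B" if "n \<in> S" for n
  proof (rule ccontr)
    assume "\<not> n \<le> B"
    then have "int p + (E0 - int n) < 0" "int q + (E0 - int n) < 0" unfolding B_def by linarith+
    then have "P = 0" "Q = 0" using that wle_neg unfolding S_def by blast+
    then show False using nz by simp
  qed
  then have fS: "finite S" by (meson finite_atMost finite_subset subsetI atMost_iff)
  define n0 where "n0 = Max S"
  have n0S: "n0 \<in> S" using fS \<open>0 \<in> S\<close> unfolding n0_def by (intro Max_in) auto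
  define e where "e = E0 - int n0"
  have w: "wle p q (int p + e) P" "wle p q (int q + e) Q" using n0S by (simp_all add: S_def e_def)
  have "hc p q (int p + e) P \<noteq> 0 \<or> hc p q (int q + e) Q \<noteq> 0"
  proof (rule ccontr)
    assume "\<not> ?thesis"
    then have "wle p q (int p + e - 1) P" "wle p q (int q + e - 1) Q"
      using wle_hc_drop w by auto
    then have "Suc n0 \<in> S" unfolding S_def e_def by (simp add: algebra_simps)
    then have "Suc n0 \<le> n0" using fS unfolding n0_def by (simp add: Max_ge)
    then show False by simp
  qed
  then show ?thesis using w by blast
qed

lemma ufd_w:
  fixes F \<alpha> \<beta> :: "'a::field_char_0 bipoly"
  assumes k1: "1 \<le> k" and F0: "F \<noteq> 0" and hom: "whom k 1 (int N) F"
    and sub: "subst \<alpha> \<beta> F = 0" and b0: "\<beta> \<noteq> 0"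
  shows "\<exists>c. \<alpha> = const2 c * \<beta>^k"
proof -
  define I where "I = N div k"
  define r where "r = N mod k"
  have Nkr: "N = k * I + r" by (simp add: I_def r_def)
  define c where "c i = cf F i (N - k*i)" for i
  have supp: "i \<le> I \<and> j = N - k*i" if "cf F i j \<noteq> 0" for i j
  proof -
    have "int (k*i + 1*j) = int N" by (rule whomD[OF hom that])
    then have e: "k*i + j = N" unfolding of_nat_eq_iff by simp
    then have "k*i \<le> N" by simp
    then have "i \<le> I" unfolding I_def using k1 by (simp add: less_eq_div_iff_mult_less_eq mult.commute)
    then show ?thesis using e by simp
  qed
  have Fsum: "F = (\<Sum>i\<le>I. mon (c i) i (N - k*i))"
  proof (rule cf_eqI)
    fix i' j'
    have "cf (\<Sum>i\<le>I. mon (c i) i (N - k*i)) i' j' = (\<Sum>i\<le>I. if i = i' \<and> j' = N - k*i then c i else 0)"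
      unfolding cf_sum by (rule sum.cong) (auto simp: cf_mon)
    also have "\<dots> = (\<Sum>i\<le>I. if i = i' then (if j' = N - k*i' then c i' else 0) else 0)"
      by (rule sum.cong) auto
    also have "\<dots> = (if i' \<le> I \<and> j' = N - k*i' then c i' else 0)"
      by (simp add: sum.delta)
    also have "\<dots> = cf F i' j'" using supp[of i' j'] by (auto simp: c_def)
    finally show "cf F i' j' = cf (\<Sum>i\<le>I. mon (c i) i (N - k*i)) i' j'" by simp
  qed
  have ex: "\<exists>i\<le>I. c i \<noteq> 0"
  proof -
    obtain i j where "cf F i j \<noteq> 0" using F0 cf_eqI[of F 0] by auto
    then show ?thesis using supp[of i j] by (auto simp: c_def)
  qed
  have "subst \<alpha> \<beta> F = (\<Sum>i\<le>I. const2 (c i) * \<alpha>^i * \<beta>^(N - k*i))"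
    by (subst Fsum) (simp add: subst_sum mon_def subst_mult subst_pow)
  also have "\<dots> = \<beta>^r * (\<Sum>i\<le>I. const2 (c i) * \<alpha>^i * (\<beta>^k)^(I - i))"
    unfolding sum_distrib_left
  proof (rule sum.cong)
    fix i assume "i \<in> {..I}"
    then have "N - k*i = r + k*(I - i)" using Nkr by (simp add: diff_mult_distrib2)
    then show "const2 (c i) * \<alpha>^i * \<beta>^(N - k*i) = \<beta>^r * (const2 (c i) * \<alpha>^i * (\<beta>^k)^(I - i))"
      by (simp add: power_add power_mult ac_simps)
  qed simp
  finally have "(\<Sum>i\<le>I. const2 (c i) * \<alpha>^i * (\<beta>^k)^(I - i)) = 0" using sub b0 by simp
  then show ?thesis using homrel[where p=\<alpha> and q="\<beta>^k" and I=I and c=c] ex b0 by simp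
qed

lemma lemmaZ:
  fixes E :: "'a::field_char_0 bipoly \<Rightarrow> 'a bipoly"
  assumes lnd: "is_LND E" and A: "E Xv \<noteq> 0" and B: "E Yv \<noteq> 0"
    and YA: "Yv dvd E Xv" and XB: "Xv dvd E Yv"
  shows False
proof -
  define a2 where "a2 = degD E Xv"
  define b2 where "b2 = degD E Yv"
  have a1: "a2 \<noteq> 0" using A degD_zero_iff[OF lnd] by (simp add: a2_def)
  have b1: "b2 \<noteq> 0" using B degD_zero_iff[OF lnd] by (simp add: b2_def)
  obtain A' where A': "E Xv = Yv * A'" using YA by (elim dvdE)
  obtain B' where B': "E Yv = Xv * B'" using XB by (elim dvdE)
  have "A' \<noteq> 0" "B' \<noteq> 0" using A B A' B' by auto
  have "degD E (E Xv) = a2 - 1" using degD_D[OF lnd] by (simp add: a2_def)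
  moreover have "degD E (E Xv) = b2 + degD E A'"
    unfolding A' b2_def using degD_mult[OF lnd] \<open>A' \<noteq> 0\<close> by simp
  moreover have "degD E (E Yv) = b2 - 1" using degD_D[OF lnd] by (simp add: b2_def)
  moreover have "degD E (E Yv) = a2 + degD E B'"
    unfolding B' a2_def using degD_mult[OF lnd] \<open>B' \<noteq> 0\<close> by simp
  ultimately show False using a1 b1 by linarith
qed

lemma W3:
  fixes A B h :: "'a::field_char_0 bipoly"
  assumes p2: "2 \<le> p" and q2: "2 \<le> q" and cop: "coprime p q"
    and lnd: "is_LND (der2 A B)" and A0: "A \<noteq> 0" and B0: "B \<noteq> 0"
    and h0: "h \<noteq> 0" and hom: "whom p q W h" and W0: "W \<noteq> 0" and ker: "der2 A B h = 0"
  shows "Yv dvd A \<and> Xv dvd B"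
proof -
  let ?E = "der2 A B"
  have nX: "\<not> Xv dvd h"
  proof
    assume "Xv dvd h"
    then obtain h' where h': "h = Xv * h'" by (elim dvdE)
    then have "h' \<noteq> 0" using h0 by auto
    then have "?E Xv = 0" using ker_factor[OF lnd, of Xv h'] ker h' by simp
    then show False using A0 by simp
  qed
  have nY: "\<not> Yv dvd h"
  proof
    assume "Yv dvd h"
    then obtain h' where h': "h = Yv * h'" by (elim dvdE)
    then have "h' \<noteq> 0" using h0 by auto
    then have "?E Yv = 0" using ker_factor[OF lnd, of Yv h'] ker h' by simp
    then show False using B0 by simp
  qed
  obtain j1 where j1: "cf h 0 j1 \<noteq> 0" using nX X_dvd_iff by blast
  obtain i1 where i1: "cf h i1 0 \<noteq> 0" using nY Y_dvd_iff by blast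
  have wj: "int (p*0 + q*j1) = W" by (rule whomD[OF hom j1])
  have wi: "int (p*i1 + q*0) = W" by (rule whomD[OF hom i1])
  have j1p: "j1 \<noteq> 0" using wj W0 by auto
  have i1p: "i1 \<noteq> 0" using wi W0 by auto
  have dv: "p dvd j \<and> q dvd i" if "cf h i j \<noteq> 0" for i j
  proof -
    have w: "int (p*i + q*j) = W" by (rule whomD[OF hom that])
    have "int (p*i + q*j) = int (p*i1 + q*0)" "int (p*i + q*j) = int (p*0 + q*j1)"
      using w wi wj by simp_all
    then have e1: "p*i + q*j = p*i1" "p*i + q*j = q*j1" unfolding of_nat_eq_iff by simp_all
    have "p dvd q*j"
    proof -
      have "q*j = p*i1 - p*i" using e1(1) by simp
      also have "\<dots> = p*(i1 - i)" by (simp add: diff_mult_distrib2)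
      finally show ?thesis by simp
    qed
    moreover have "q dvd p*i"
    proof -
      have "p*i = q*j1 - q*j" using e1(2) by simp
      also have "\<dots> = q*(j1 - j)" by (simp add: diff_mult_distrib2)
      finally show ?thesis by simp
    qed
    ultimately show ?thesis using cop
      by (simp add: coprime_dvd_mult_right_iff coprime_commute[of p q] coprime_dvd_mult_right_iff)
  qed
  have Ydy: "Yv dvd dy h" unfolding Y_dvd_iff
  proof
    fix i show "cf (dy h) i 0 = 0"
    proof (rule ccontr)
      assume "cf (dy h) i 0 \<noteq> 0"
      then have "cf h i 1 \<noteq> 0" by (simp add: cf_dy)
      then have "p dvd 1" using dv by blast
      then show False using p2 by simp
    qed
  qed
  have Xdx: "Xv dvd dx h" unfolding X_dvd_iff
  proof
    fix j show "cf (dx h) 0 j = 0"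
    proof (rule ccontr)
      assume "cf (dx h) 0 j \<noteq> 0"
      then have "cf h 1 j \<noteq> 0" by (simp add: cf_dx)
      then have "q dvd 1" using dv by blast
      then show False using q2 by simp
    qed
  qed
  have nYdx: "\<not> Yv dvd dx h" unfolding Y_dvd_iff
  proof
    assume "\<forall>i. cf (dx h) i 0 = 0"
    then have "cf (dx h) (i1 - 1) 0 = 0" by blast
    then show False using i1 i1p by (simp add: cf_dx)
  qed
  have nXdy: "\<not> Xv dvd dy h" unfolding X_dvd_iff
  proof
    assume "\<forall>j. cf (dy h) 0 j = 0"
    then have "cf (dy h) 0 (j1 - 1) = 0" by blast
    then show False using j1 j1p by (simp add: cf_dy)
  qed
  have eq: "dx h * A = - (dy h * B)" using ker by (simp add: der2_def eq_neg_iff_add_eq_0)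
  have "Yv dvd dx h * A" unfolding eq using Ydy by simp
  then have YA: "Yv dvd A" using Y_prime nYdx by blast
  have eq2: "dy h * B = - (dx h * A)" using eq by simp
  have "Xv dvd dy h * B" unfolding eq2 using Xdx by simp
  then have XB: "Xv dvd B" using X_prime nXdy by blast
  show ?thesis using YA XB by simp
qed

lemma lemmaW:
  fixes A B :: "'a::field_char_0 bipoly"
  assumes p2: "2 \<le> p" and q2: "2 \<le> q" and cop: "coprime p q"
    and hA: "whom p q (int p + e) A" and hB: "whom p q (int q + e) B"
    and A0: "A \<noteq> 0" and B0: "B \<noteq> 0" and lnd: "is_LND (der2 A B)"
  shows False
proof -
  let ?E = "der2 A B"
  define a2 where "a2 = degD ?E Xv"
  define b2 where "b2 = degD ?E Yv"
  have a1: "a2 \<noteq> 0" using A0 degD_zero_iff[OF lnd, of Xv] by (simp add: a2_def)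
  have b1: "b2 \<noteq> 0" using B0 degD_zero_iff[OF lnd, of Yv] by (simp add: b2_def)
  define h1 where "h1 = (?E^^a2) Xv"
  define h2 where "h2 = (?E^^b2) Yv"
  have h1nz: "h1 \<noteq> 0" unfolding h1_def a2_def by (rule degD_nz[OF lnd]) simp
  have h2nz: "h2 \<noteq> 0" unfolding h2_def b2_def by (rule degD_nz[OF lnd]) simp
  have h1k: "?E h1 = 0" unfolding h1_def a2_def using degD_kill[OF lnd, of Xv] by (simp add: iter_Suc)
  have h2k: "?E h2 = 0" unfolding h2_def b2_def using degD_kill[OF lnd, of Yv] by (simp add: iter_Suc)
  have h1w: "whom p q (int p + int a2 * e) h1" unfolding h1_def by (rule whom_der2_iter[OF hA hB whom_X])
  have h2w: "whom p q (int q + int b2 * e) h2" unfolding h2_def by (rule whom_der2_iter[OF hA hB whom_Y])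
  have "Yv dvd A \<and> Xv dvd B"
  proof (cases "int p + int a2 * e = 0 \<and> int q + int b2 * e = 0")
    case False
    then have "int p + int a2 * e \<noteq> 0 \<or> int q + int b2 * e \<noteq> 0" by simp
    then show ?thesis
    proof
      assume "int p + int a2 * e \<noteq> 0"
      then show ?thesis using W3[OF p2 q2 cop lnd A0 B0 h1nz h1w _ h1k] by blast
    next
      assume "int q + int b2 * e \<noteq> 0"
      then show ?thesis using W3[OF p2 q2 cop lnd A0 B0 h2nz h2w _ h2k] by blast
    qed
  next
    case True
    then have ep: "int p + int a2 * e = 0" and eq: "int q + int b2 * e = 0" by simp_all
    have eneg: "e < 0"
    proof (rule ccontr)
      assume "\<not> e < 0"
      then have "0 \<le> int a2 * e" by simp
      then show False using ep p2 by linarith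
    qed
    have YA: "Yv dvd A" unfolding Y_dvd_iff
    proof
      fix i show "cf A i 0 = 0"
      proof (rule ccontr)
        assume "cf A i 0 \<noteq> 0"
        then have w: "int (p*i + q*0) = int p + e" by (rule whomD[OF hA])
        then have "p*i < p" using eneg by linarith
        then have "i = 0" by (cases i) auto
        then have "e = - int p" using w by simp
        then have "int q = int b2 * int p" using eq by simp
        then have "q = b2 * p" by (simp only: of_nat_mult[symmetric] of_nat_eq_iff)
        then have "p dvd q" by simp
        then have "p = 1" using coprime_common_divisor_nat[OF cop, of p] by simp
        then show False using p2 by simp
      qed
    qed
    have XB: "Xv dvd B" unfolding X_dvd_iff
    proof
      fix j show "cf B 0 j = 0"
      proof (rule ccontr)
        assume "cf B 0 j \<noteq> 0"
        then have w: "int (p*0 + q*j) = int q + e" by (rule whomD[OF hB])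
        then have "q*j < q" using eneg by linarith
        then have "j = 0" by (cases j) auto
        then have "e = - int q" using w by simp
        then have "int p = int a2 * int q" using ep by simp
        then have "p = a2 * q" by (simp only: of_nat_mult[symmetric] of_nat_eq_iff)
        then have "q dvd p" by simp
        then have "q = 1" using coprime_common_divisor_nat[OF cop, of q] by simp
        then show False using q2 by simp
      qed
    qed
    show ?thesis using YA XB by simp
  qed
  then show False using lemmaZ[OF lnd] A0 B0 by simp
qed


context fixes D :: "'a::field_char_0 bipoly \<Rightarrow> 'a bipoly" assumes der: "is_derivation D"
begin
lemma Lf_0[simp]: "Lf D 0 f = f" by (simp add: Lf_def[OF der])
lemma Lf_1: "Lf D 1 f = D f" by (simp add: Lf_def[OF der])
lemma Lf_Suc: "Lf D (Suc n) f = const2 (inverse (of_nat (Suc n))) * Lf D n (D f)"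
proof -
  have "inverse (fact (Suc n) :: 'a) = inverse (of_nat (Suc n)) * inverse (fact n)"
    by (simp del: of_nat_Suc add: field_simps)
  then show ?thesis
    by (simp add: Lf_def[OF der] iter_Suc'[OF der] const2_mult mult.assoc del: of_nat_Suc fact_Suc)
qed
lemma Lf_diff: "Lf D m (f - g) = Lf D m f - Lf D m g"
  by (simp add: Lf_def[OF der] iter_diff[OF der] right_diff_distrib)
lemma Lf_cmult: "Lf D m (const2 c * f) = const2 c * Lf D m f"
  by (simp add: Lf_def[OF der] iter_cmult[OF der] mult.left_commute)
end

lemma subst_mon_c: "subst U V (mon c i j) = const2 c * U^i * V^j"
  by (simp add: mon_def subst_mult subst_pow)

lemma lin_id: "lin (\<lambda>f. f)" by (simp add: lin_def)

lemma exists_top1: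
  fixes F :: "'a::field_char_0 bipoly"
  assumes F0: "F \<noteq> 0" shows "\<exists>N. wle p q (int N) F \<and> hc p q (int N) F \<noteq> 0"
proof -
  obtain e where e: "wle p q (int p + e) F" "hc p q (int p + e) F \<noteq> 0"
    using exists_top[of F 0 p q] F0 by auto
  have "0 \<le> int p + e"
  proof (rule ccontr)
    assume "\<not> ?thesis"
    then have "F = 0" using wle_neg[OF e(1)] by simp
    then show False using F0 by simp
  qed
  then obtain N where "int p + e = int N" by (metis nonneg_int_cases)
  then show ?thesis using e by metis
qed

lemma onlyY:
  fixes E :: "'a::field_char_0 bipoly \<Rightarrow> 'a bipoly"
  assumes lnd: "is_LND E" and EY: "E Yv = 0" and F0: "E Xv \<noteq> 0" and nz: "cf (E Xv) i j \<noteq> 0"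
  shows "i = 0"
proof -
  note der = lnd_der[OF lnd]
  define F where "F = E Xv"
  define a3 where "a3 = degD E Xv"
  have a31: "1 \<le> a3" using F0 degD_zero_iff[OF lnd, of Xv] by (simp add: a3_def)
  have kx: "(E^^Suc (a3*1)) Xv = 0" using degD_kill[OF lnd, of Xv] by (simp add: a3_def)
  have ky: "(E^^Suc (a3*0)) Yv = 0" using EY by simp
  obtain N where wN: "wle 1 0 (int N) F" and H0': "hc 1 0 (int N) F \<noteq> 0"
    using exists_top1[of F 1 0] F0 by (auto simp: F_def)
  define H where "H = hc 1 0 (int N) F"
  have H0: "H \<noteq> 0" using H0' by (simp add: H_def)
  have lt: "Lf E (a3*N) F = subst (Lf E (a3*1) Xv) (Lf E (a3*0) Yv) H"
    unfolding H_def by (rule link_top[OF lnd a31 kx ky wN])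
  define \<alpha> where "\<alpha> = Lf E a3 Xv"
  have \<alpha>0: "\<alpha> \<noteq> 0" unfolding \<alpha>_def Lf_zero_iff[OF der] a3_def by (rule degD_nz[OF lnd]) simp
  have cfH: "cf H i j = (if i = N then cf F i j else 0)" for i j
    by (simp add: H_def cf_hc wt_def)
  define R where "R = mk (\<lambda>i j. if i = 0 then cf H N j else 0)"
  have cfR: "cf R i j = (if i = 0 then cf H N j else 0)" for i j
    unfolding R_def by (rule cf_mk[of _ 0 "degree H"]) (auto split: if_splits dest: cf_nz_bound)
  have HR: "H = Xv^N * R"
    by (rule cf_eqI) (auto simp: cf_Xpow_mult cfR cfH)
  have sR: "subst \<alpha> Yv R = R"
  proof -
    have "subst \<alpha> Yv R = (\<lambda>f. f) R"
    proof (rule lin_eqI[OF lin_subst lin_id])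
      fix i j assume "cf R i j \<noteq> 0"
      then have "i = 0" by (simp add: cfR split: if_splits)
      then show "subst \<alpha> Yv (Xv^i * Yv^j) = Xv^i * Yv^j" by (simp add: subst_pow)
    qed
    then show ?thesis by simp
  qed
  have R0: "R \<noteq> 0" using H0 HR by auto
  have ee: "Lf E (a3*1) Xv = \<alpha>" "Lf E (a3*0) Yv = Yv" by (simp_all add: \<alpha>_def Lf_0[OF der])
  have "Lf E (a3*N) F = subst \<alpha> Yv (Xv^N * R)" using lt unfolding ee HR .
  also have "\<dots> = \<alpha>^N * R" by (simp add: subst_mult subst_pow sR)
  finally have "Lf E (a3*N) F = \<alpha>^N * R" .
  then have "Lf E (a3*N) F \<noteq> 0" using \<alpha>0 R0 by simp
  then have nzi: "(E^^(a3*N)) F \<noteq> 0" by (simp add: Lf_zero_iff[OF der])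
  have k: "(E^^a3) F = 0" using degD_kill[OF lnd, of Xv] by (simp add: F_def a3_def iter_Suc'[OF der])
  have "N = 0"
  proof (rule ccontr)
    assume "N \<noteq> 0"
    then have "a3 \<le> a3*N" by simp
    then have "(E^^(a3*N)) F = 0" by (rule iter_mono[OF der k])
    then show False using nzi by simp
  qed
  then have "wle 1 0 0 F" using wN by simp
  then have "wt 1 0 i j \<le> 0" using nz by (simp add: F_def wleD)
  then show "i = 0" by (simp add: wt_def)
qed

lemma onlyX:
  fixes E :: "'a::field_char_0 bipoly \<Rightarrow> 'a bipoly"
  assumes lnd: "is_LND E" and EX: "E Xv = 0" and F0: "E Yv \<noteq> 0" and nz: "cf (E Yv) i j \<noteq> 0"
  shows "j = 0"
proof -
  note der = lnd_der[OF lnd]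
  define F where "F = E Yv"
  define a3 where "a3 = degD E Yv"
  have a31: "1 \<le> a3" using F0 degD_zero_iff[OF lnd, of Yv] by (simp add: a3_def)
  have ky: "(E^^Suc (a3*1)) Yv = 0" using degD_kill[OF lnd, of Yv] by (simp add: a3_def)
  have kx: "(E^^Suc (a3*0)) Xv = 0" using EX by simp
  obtain N where wN: "wle 0 1 (int N) F" and H0': "hc 0 1 (int N) F \<noteq> 0"
    using exists_top1[of F 0 1] F0 by (auto simp: F_def)
  define H where "H = hc 0 1 (int N) F"
  have H0: "H \<noteq> 0" using H0' by (simp add: H_def)
  have lt: "Lf E (a3*N) F = subst (Lf E (a3*0) Xv) (Lf E (a3*1) Yv) H"
    unfolding H_def by (rule link_top[OF lnd a31 kx ky wN])
  define \<beta> where "\<beta> = Lf E a3 Yv"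
  have \<beta>0: "\<beta> \<noteq> 0" unfolding \<beta>_def Lf_zero_iff[OF der] a3_def by (rule degD_nz[OF lnd]) simp
  have cfH: "cf H i j = (if j = N then cf F i j else 0)" for i j
    by (simp add: H_def cf_hc wt_def)
  define R where "R = mk (\<lambda>i j. if j = 0 then cf H i N else 0)"
  have cfR: "cf R i j = (if j = 0 then cf H i N else 0)" for i j
    unfolding R_def by (rule cf_mk[of _ "bnd H" 0]) (auto split: if_splits dest: cf_nz_bound)
  have HR: "H = Yv^N * R"
    by (rule cf_eqI) (auto simp: cf_Ypow_mult cfR cfH)
  have sR: "subst Xv \<beta> R = R"
  proof -
    have "subst Xv \<beta> R = (\<lambda>f. f) R"
    proof (rule lin_eqI[OF lin_subst lin_id])
      fix i j assume "cf R i j \<noteq> 0"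
      then have "j = 0" by (simp add: cfR split: if_splits)
      then show "subst Xv \<beta> (Xv^i * Yv^j) = Xv^i * Yv^j" by (simp add: subst_pow)
    qed
    then show ?thesis by simp
  qed
  have R0: "R \<noteq> 0" using H0 HR by auto
  have ee: "Lf E (a3*0) Xv = Xv" "Lf E (a3*1) Yv = \<beta>" by (simp_all add: \<beta>_def Lf_0[OF der])
  have "Lf E (a3*N) F = subst Xv \<beta> (Yv^N * R)" using lt unfolding ee HR .
  also have "\<dots> = \<beta>^N * R" by (simp add: subst_mult subst_pow sR)
  finally have "Lf E (a3*N) F = \<beta>^N * R" .
  then have "Lf E (a3*N) F \<noteq> 0" using \<beta>0 R0 by simp
  then have nzi: "(E^^(a3*N)) F \<noteq> 0" by (simp add: Lf_zero_iff[OF der])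
  have k: "(E^^a3) F = 0" using degD_kill[OF lnd, of Yv] by (simp add: F_def a3_def iter_Suc'[OF der])
  have "N = 0"
  proof (rule ccontr)
    assume "N \<noteq> 0"
    then have "a3 \<le> a3*N" by simp
    then have "(E^^(a3*N)) F = 0" by (rule iter_mono[OF der k])
    then show False using nzi by simp
  qed
  then have "wle 0 1 0 F" using wN by simp
  then have "wt 0 1 i j \<le> 0" using nz by (simp add: F_def wleD)
  then show "j = 0" by (simp add: wt_def)
qed

lemma single_mon_Y:
  fixes F :: "'a::field_char_0 bipoly"
  assumes F0: "F \<noteq> 0" and hom: "whom p q M F" and q1: "1 \<le> q" and only: "\<And>i j. cf F i j \<noteq> 0 \<Longrightarrow> i = 0"
  shows "\<exists>c j0. c \<noteq> 0 \<and> F = mon c 0 j0"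
proof -
  obtain i0 j0 where nz: "cf F i0 j0 \<noteq> 0" using F0 cf_eqI[of F 0] by auto
  have i0: "i0 = 0" using only[OF nz] .
  have "F = mon (cf F 0 j0) 0 j0"
  proof (rule cf_eqI)
    fix i j
    show "cf F i j = cf (mon (cf F 0 j0) 0 j0) i j"
    proof (cases "cf F i j = 0")
      case False
      then have i: "i = 0" using only by blast
      have "int (p*i + q*j) = int (p*i0 + q*j0)" using whomD[OF hom False] whomD[OF hom nz] by (rule trans[OF _ sym])
      then have "p*i + q*j = p*i0 + q*j0" by (simp only: of_nat_eq_iff)
      then have "q*j = q*j0" using i i0 by simp
      then show ?thesis using q1 i by (simp add: cf_mon)
    next
      case True
      then show ?thesis using nz i0 by (cases "i = 0") (auto simp: cf_mon)
    qed
  qed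
  then show ?thesis using nz i0 by blast
qed

lemma single_mon_X:
  fixes F :: "'a::field_char_0 bipoly"
  assumes F0: "F \<noteq> 0" and hom: "whom p q M F" and p1: "1 \<le> p" and only: "\<And>i j. cf F i j \<noteq> 0 \<Longrightarrow> j = 0"
  shows "\<exists>c i0. c \<noteq> 0 \<and> F = mon c i0 0"
proof -
  obtain i0 j0 where nz: "cf F i0 j0 \<noteq> 0" using F0 cf_eqI[of F 0] by auto
  have j0: "j0 = 0" using only[OF nz] .
  have "F = mon (cf F i0 0) i0 0"
  proof (rule cf_eqI)
    fix i j
    show "cf F i j = cf (mon (cf F i0 0) i0 0) i j"
    proof (cases "cf F i j = 0")
      case False
      then have j: "j = 0" using only by blast
      have "int (p*i + q*j) = int (p*i0 + q*j0)" using whomD[OF hom False] whomD[OF hom nz] by (rule trans[OF _ sym])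
      then have "p*i + q*j = p*i0 + q*j0" by (simp only: of_nat_eq_iff)
      then have "p*i = p*i0" using j j0 by simp
      then show ?thesis using p1 j by (simp add: cf_mon)
    next
      case True
      then show ?thesis using nz j0 by (cases "j = 0") (auto simp: cf_mon)
    qed
  qed
  then show ?thesis using nz j0 by blast
qed


lemma exact_deg:
  fixes D :: "'a::field_char_0 bipoly \<Rightarrow> 'a bipoly"
  assumes der: "is_derivation D" and A: "(D^^n) f \<noteq> 0" and B: "(D^^Suc n) f = 0"
    and C: "(D^^a) f = 0" and E: "(D^^(a-1)) f \<noteq> 0" and a1: "1 \<le> a"
  shows "a - 1 = n"
proof -
  have "n < a"
  proof (rule ccontr)
    assume "\<not> n < a"
    then have "a \<le> n" by simp
    then have "(D^^n) f = 0" by (rule iter_mono[OF der C])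
    then show False using A by simp
  qed
  moreover have "a - 1 \<le> n"
  proof (rule ccontr)
    assume "\<not> a - 1 \<le> n"
    then have "Suc n \<le> a - 1" by simp
    then have "(D^^(a-1)) f = 0" by (rule iter_mono[OF der B])
    then show False using E by simp
  qed
  ultimately show ?thesis by simp
qed

lemma KL_half:
  fixes D :: "'a::field_char_0 bipoly \<Rightarrow> 'a bipoly"
  assumes lnd: "is_LND D" and b1: "1 \<le> degD D Yv" and ba: "degD D Yv \<le> degD D Xv"
  shows "\<exists>k c. 1 \<le> k \<and> (D^^(degD D Xv)) (Xv - const2 c * Yv^k) = 0"
proof -
  note der = lnd_der[OF lnd]
  define a where "a = degD D Xv"
  define b where "b = degD D Yv"
  have a1: "1 \<le> a" and b1': "1 \<le> b" and ba': "b \<le> a" using b1 ba by (simp_all add: a_def b_def)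
  define g where "g = gcd a b"
  have g0: "0 < g" using a1 by (simp add: g_def)
  have g1: "1 \<le> g" using g0 by simp
  define a' where "a' = a div g"
  define b' where "b' = b div g"
  have aa: "a = g * a'" and bb: "b = g * b'" by (simp_all add: g_def a'_def b'_def)
  have cop: "coprime a' b'" unfolding a'_def b'_def g_def by (rule div_gcd_coprime) (use a1 in simp)
  have a'1: "1 \<le> a'" using aa a1 by (cases a') auto
  have b'1: "1 \<le> b'" using bb b1' by (cases b') auto
  have ab': "b' \<le> a'" unfolding a'_def b'_def using ba' by (rule div_le_mono)
  define P where "P = D Xv"
  define Q where "Q = D Yv"
  have Dder: "D = der2 P Q" unfolding P_def Q_def by (rule chain_rule[OF der])
  have kx: "(D^^Suc (g*a')) Xv = 0" using degD_kill[OF lnd, of Xv] aa by (simp add: a_def)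
  have ky: "(D^^Suc (g*b')) Yv = 0" using degD_kill[OF lnd, of Yv] bb by (simp add: b_def)
  define \<alpha> where "\<alpha> = Lf D a Xv"
  define \<beta> where "\<beta> = Lf D b Yv"
  have \<alpha>0: "\<alpha> \<noteq> 0" unfolding \<alpha>_def Lf_zero_iff[OF der] a_def by (rule degD_nz[OF lnd]) simp
  have \<beta>0: "\<beta> \<noteq> 0" unfolding \<beta>_def Lf_zero_iff[OF der] b_def by (rule degD_nz[OF lnd]) simp
  have \<alpha>g: "Lf D (g*a') Xv = \<alpha>" using aa by (simp add: \<alpha>_def)
  have \<beta>g: "Lf D (g*b') Yv = \<beta>" using bb by (simp add: \<beta>_def)
  note lk = link_kill[OF lnd g1 kx ky] and lt = link_top[OF lnd g1 kx ky]
  have PS: "(D^^n) P = (D^^Suc n) Xv" for n by (simp add: P_def iter_Suc'[OF der])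
  have QS: "(D^^n) Q = (D^^Suc n) Yv" for n by (simp add: Q_def iter_Suc'[OF der])
  have Pa: "(D^^a) P = 0" using degD_kill[OF lnd, of Xv] PS by (simp add: a_def)
  have Pa1: "(D^^(a-1)) P \<noteq> 0" using PS[of "a-1"] degD_nz[OF lnd, of Xv] a1 by (simp add: a_def)
  have Qb: "(D^^b) Q = 0" using degD_kill[OF lnd, of Yv] QS by (simp add: b_def)
  have Qb1: "(D^^(b-1)) Q \<noteq> 0" using QS[of "b-1"] degD_nz[OF lnd, of Yv] b1' by (simp add: b_def)
  have P0: "P \<noteq> 0" using Pa1 iter_0[OF der] by auto
  have Q0: "Q \<noteq> 0" using Qb1 iter_0[OF der] by auto
  obtain e where we1: "wle a' b' (int a' + e) P" and we2: "wle a' b' (int b' + e) Q"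
    and top: "hc a' b' (int a' + e) P \<noteq> 0 \<or> hc a' b' (int b' + e) Q \<noteq> 0"
    using exists_top[of P Q a' b'] P0 by blast
  show ?thesis
  proof (cases "e < 0")
    case True
    have Pi: "i = 0" if "cf P i j \<noteq> 0" for i j
    proof -
      have "int (a'*i + b'*j) \<le> int a' + e" using wleD[OF we1 that] by (simp add: wt_def)
      then have "int (a'*i + b'*j) < int a'" using True by linarith
      then have "a'*i < a'" by linarith
      then show "i = 0" by (cases i) auto
    qed
    have Qj: "j = 0" if "cf Q i j \<noteq> 0" for i j
    proof -
      have "int (a'*i + b'*j) \<le> int b' + e" using wleD[OF we2 that] by (simp add: wt_def)
      then have "int (a'*i + b'*j) < int b'" using True by linarith
      then have "b'*j < b'" by linarith
      then show "j = 0" by (cases j) auto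
    qed
    define m where "m = degree P"
    define cm where "cm = cf P 0 m"
    have cm0: "cm \<noteq> 0"
    proof
      assume c0: "cm = 0"
      have "coeff P m = 0"
      proof (rule poly_eqI)
        fix i show "coeff (coeff P m) i = coeff 0 i"
          using Pi[of i m] c0 by (cases "i = 0") (auto simp: cm_def cf_def)
      qed
      then show False using P0 by (simp add: m_def)
    qed
    have wP: "wle a' b' (int (b'*m)) P"
    proof (rule wleI)
      fix i j assume nz: "cf P i j \<noteq> 0"
      then have "i = 0" by (rule Pi)
      moreover have "j \<le> m" using cf_nz_bound(2)[OF nz] by (simp add: m_def)
      ultimately show "wt a' b' i j \<le> int (b'*m)" unfolding wt_def of_nat_le_iff by (simp add: mult_le_mono2)
    qed
    have HP: "hc a' b' (int (b'*m)) P = mon cm 0 m"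
    proof (rule cf_eqI)
      fix i j
      show "cf (hc a' b' (int (b'*m)) P) i j = cf (mon cm 0 m) i j"
      proof (cases "cf P i j = 0")
        case True
        then show ?thesis using cm0 by (cases "i = 0 \<and> j = m") (auto simp: cf_hc cf_mon cm_def)
      next
        case False
        then have i0: "i = 0" by (rule Pi)
        have "wt a' b' i j = int (b'*m) \<longleftrightarrow> j = m" using i0 b'1 by (simp add: wt_def)
        then show ?thesis using i0 by (auto simp: cf_hc cf_mon cm_def)
      qed
    qed
    have "Lf D (g*(b'*m)) P = const2 cm * \<beta>^m"
      using lt[OF wP] unfolding HP \<alpha>g \<beta>g by (simp add: subst_mon_c)
    then have LP: "Lf D (b*m) P = const2 cm * \<beta>^m" using bb by (simp add: mult.assoc)
    then have "(D^^(b*m)) P \<noteq> 0" using cm0 \<beta>0 by (simp add: Lf_zero_iff[OF der, symmetric])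
    moreover have "(D^^Suc (b*m)) P = 0" using lk[OF wP] bb by (simp add: mult.assoc)
    ultimately have am: "a - 1 = b*m" using exact_deg[OF der _ _ Pa Pa1 a1] by blast
    define n where "n = degree (coeff Q 0)"
    define cn where "cn = cf Q n 0"
    have cQ0: "coeff Q 0 \<noteq> 0"
    proof
      assume z: "coeff Q 0 = 0"
      have "Q = 0"
      proof (rule cf_eqI)
        fix i j show "cf Q i j = cf 0 i j"
        proof (rule ccontr)
          assume "cf Q i j \<noteq> cf 0 i j"
          then have nz: "cf Q i j \<noteq> 0" by simp
          then have "j = 0" by (rule Qj)
          then show False using nz z by (simp add: cf_def)
        qed
      qed
      then show False using Q0 by simp
    qed
    have cn0: "cn \<noteq> 0" using cQ0 by (simp add: cn_def n_def cf_def)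
    have wQ: "wle a' b' (int (a'*n)) Q"
    proof (rule wleI)
      fix i j assume nz: "cf Q i j \<noteq> 0"
      then have j0: "j = 0" by (rule Qj)
      moreover have "i \<le> n" using nz j0 by (simp add: n_def cf_def le_degree)
      ultimately show "wt a' b' i j \<le> int (a'*n)" unfolding wt_def of_nat_le_iff by (simp add: mult_le_mono2)
    qed
    have HQ: "hc a' b' (int (a'*n)) Q = mon cn n 0"
    proof (rule cf_eqI)
      fix i j
      show "cf (hc a' b' (int (a'*n)) Q) i j = cf (mon cn n 0) i j"
      proof (cases "cf Q i j = 0")
        case True
        then show ?thesis using cn0 by (cases "i = n \<and> j = 0") (auto simp: cf_hc cf_mon cn_def)
      next
        case False
        then have j0: "j = 0" by (rule Qj)
        have "wt a' b' i j = int (a'*n) \<longleftrightarrow> i = n" using j0 a'1 by (simp add: wt_def)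
        then show ?thesis using j0 by (auto simp: cf_hc cf_mon cn_def)
      qed
    qed
    have "Lf D (g*(a'*n)) Q = const2 cn * \<alpha>^n"
      using lt[OF wQ] unfolding HQ \<alpha>g \<beta>g by (simp add: subst_mon_c)
    then have LQ: "Lf D (a*n) Q = const2 cn * \<alpha>^n" using aa by (simp add: mult.assoc)
    then have "(D^^(a*n)) Q \<noteq> 0" using cn0 \<alpha>0 by (simp add: Lf_zero_iff[OF der, symmetric])
    moreover have "(D^^Suc (a*n)) Q = 0" using lk[OF wQ] aa by (simp add: mult.assoc)
    ultimately have bn: "b - 1 = a*n" using exact_deg[OF der _ _ Qb Qb1 b1'] by blast
    have n0: "n = 0"
    proof (rule ccontr)
      assume "n \<noteq> 0"
      then have "a \<le> a*n" by simp
      then show False using bn ba' b1' by linarith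
    qed
    have b_1: "b = 1" using bn n0 b1' by simp
    have m_eq: "m = a - 1" using am b_1 by simp
    have Qc: "Q = const2 cn" using LQ n0 by (simp add: Lf_0[OF der])
    have "\<beta> = D Yv" unfolding \<beta>_def b_1 by (rule Lf_1[OF der])
    then have \<beta>c: "\<beta> = const2 cn" using Qc by (simp add: Q_def)
    have "\<alpha> = const2 (inverse (of_nat a)) * Lf D (a-1) P"
    proof -
      have "\<alpha> = Lf D (Suc (a-1)) Xv" using a1 by (simp add: \<alpha>_def)
      then have "\<alpha> = const2 (inverse (of_nat (Suc (a-1)))) * Lf D (a-1) (D Xv)"
        by (simp only: Lf_Suc[OF der])
      then show ?thesis using a1 by (simp add: P_def)
    qed
    also have "\<dots> = const2 (inverse (of_nat a) * cm * cn^(a-1))"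
      using LP b_1 m_eq \<beta>c by (simp add: const2_mult const2_pow mult.assoc)
    finally have \<alpha>c: "\<alpha> = const2 (inverse (of_nat a) * cm * cn^(a-1))" .
    define c where "c = cm / (of_nat a * cn)"
    have kyb: "(D^^Suc 1) Yv = 0" using ky bb b_1 by simp
    have "Lf D (a*1) (Yv^a) = (Lf D 1 Yv)^a" using Lf_pow[OF der kyb] by blast
    then have LY: "Lf D a (Yv^a) = \<beta>^a" using b_1 by (simp add: \<beta>_def)
    have "Lf D a (Xv - const2 c * Yv^a) = \<alpha> - const2 c * \<beta>^a"
      by (simp add: Lf_diff[OF der] Lf_cmult[OF der] LY \<alpha>_def)
    also have "\<dots> = const2 (inverse (of_nat a) * cm * cn^(a-1) - c * cn^a)"
      by (simp add: \<alpha>c \<beta>c const2_diff const2_mult const2_pow)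
    also have "inverse (of_nat a) * cm * cn^(a-1) - c * cn^a = 0"
    proof -
      have "cn^a = cn * cn^(a-1)" using a1 by (simp add: power_eq_if)
      then show ?thesis using cn0 a1 by (simp add: c_def field_simps)
    qed
    finally have "(D^^a) (Xv - const2 c * Yv^a) = 0" by (simp add: Lf_zero_iff[OF der])
    then show ?thesis using a1 unfolding a_def by blast
  next
    case False
    define e' where "e' = nat e"
    have e': "e = int e'" using False by (simp add: e'_def)
    define Ph where "Ph = hc a' b' (int a' + e) P"
    define Qh where "Qh = hc a' b' (int b' + e) Q"
    have gr: "is_LND (der2 Ph Qh)"
      unfolding Ph_def Qh_def by (rule gr_LND[OF _ we1 we2]) (use lnd Dder in simp)
    have hP: "whom a' b' (int a' + e) Ph" by (simp add: Ph_def whom_hc)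
    have hQ: "whom a' b' (int b' + e) Qh" by (simp add: Qh_def whom_hc)
    have cancP: "subst \<alpha> \<beta> Ph = 0"
    proof -
      have w: "wle a' b' (int (a' + e')) P" using we1 e' by simp
      have "Lf D (g*(a'+e')) P = subst \<alpha> \<beta> Ph"
        using lt[OF w] e' unfolding \<alpha>g \<beta>g Ph_def by simp
      moreover have "a \<le> g*(a'+e')" using aa by simp
      then have "(D^^(g*(a'+e'))) P = 0" by (rule iter_mono[OF der Pa])
      ultimately show ?thesis by (simp add: Lf_zero_iff[OF der, symmetric])
    qed
    have cancQ: "subst \<alpha> \<beta> Qh = 0"
    proof -
      have w: "wle a' b' (int (b' + e')) Q" using we2 e' by simp
      have "Lf D (g*(b'+e')) Q = subst \<alpha> \<beta> Qh"
        using lt[OF w] e' unfolding \<alpha>g \<beta>g Qh_def by simp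
      moreover have "b \<le> g*(b'+e')" using bb by simp
      then have "(D^^(g*(b'+e'))) Q = 0" by (rule iter_mono[OF der Qb])
      ultimately show ?thesis by (simp add: Lf_zero_iff[OF der, symmetric])
    qed
    have nzPQ: "Ph \<noteq> 0 \<or> Qh \<noteq> 0" using top by (simp add: Ph_def Qh_def)
    show ?thesis
    proof (cases "b' = 1")
      case True
      have "\<exists>N F. F \<noteq> 0 \<and> whom a' 1 (int N) F \<and> subst \<alpha> \<beta> F = 0"
      proof (cases "Ph = 0")
        case False
        then show ?thesis using hP cancP e' True by (intro exI[of _ "a' + e'"] exI[of _ Ph]) simp
      next
        case True2: True
        then have "Qh \<noteq> 0" using nzPQ by simp
        then show ?thesis using hQ cancQ e' True by (intro exI[of _ "1 + e'"] exI[of _ Qh]) simp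
      qed
      then obtain N F where F: "F \<noteq> 0" "whom a' 1 (int N) F" "subst \<alpha> \<beta> F = 0" by blast
      obtain c where c: "\<alpha> = const2 c * \<beta>^a'" using ufd_w[OF a'1 F \<beta>0] by blast
      have ab: "a = a' * b" using aa bb True by simp
      have kyb: "(D^^Suc b) Yv = 0" using degD_kill[OF lnd, of Yv] by (simp add: b_def)
      have LY: "Lf D a (Yv^a') = \<beta>^a'" using Lf_pow[OF der kyb, of a'] ab by (simp add: \<beta>_def)
      have "Lf D a (Xv - const2 c * Yv^a') = \<alpha> - const2 c * \<beta>^a'"
        by (simp add: Lf_diff[OF der] Lf_cmult[OF der] LY \<alpha>_def)
      then have "Lf D a (Xv - const2 c * Yv^a') = 0" using c by simp
      then have "(D^^a) (Xv - const2 c * Yv^a') = 0" by (simp add: Lf_zero_iff[OF der])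
      then show ?thesis using a'1 unfolding a_def by blast
    next
      case False
      then have b'2: "2 \<le> b'" using b'1 by simp
      then have a'2: "2 \<le> a'" using ab' by simp
      have "Ph = 0 \<or> Qh = 0"
      proof (rule ccontr)
        assume "\<not> ?thesis"
        then show False using lemmaW[OF a'2 b'2 cop hP hQ _ _ gr] by simp
      qed
      then show ?thesis
      proof
        assume Q0': "Qh = 0"
        then have Ph0: "Ph \<noteq> 0" using nzPQ by simp
        have only: "i = 0" if "cf Ph i j \<noteq> 0" for i j
          using onlyY[of "der2 Ph Qh" i j] gr Q0' Ph0 that by simp
        have "\<exists>c j0. c \<noteq> 0 \<and> Ph = mon c 0 j0" by (rule single_mon_Y[OF Ph0 hP b'1 only])
        then obtain c0 j0 where "c0 \<noteq> 0" "Ph = mon c0 0 j0" by blast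
        then have "subst \<alpha> \<beta> Ph \<noteq> 0" using \<beta>0 by (simp add: subst_mon_c)
        then show ?thesis using cancP by simp
      next
        assume P0': "Ph = 0"
        then have Qh0: "Qh \<noteq> 0" using nzPQ by simp
        have only: "j = 0" if "cf Qh i j \<noteq> 0" for i j
          using onlyX[of "der2 Ph Qh" i j] gr P0' Qh0 that by simp
        have "\<exists>c i0. c \<noteq> 0 \<and> Qh = mon c i0 0" by (rule single_mon_X[OF Qh0 hQ a'1 only])
        then obtain c0 i0 where "c0 \<noteq> 0" "Qh = mon c0 i0 0" by blast
        then have "subst \<alpha> \<beta> Qh \<noteq> 0" using \<alpha>0 by (simp add: subst_mon_c)
        then show ?thesis using cancQ by simp
      qed
    qed
  qed
qed


definition aut :: "('a::field_char_0 bipoly \<Rightarrow> 'a bipoly) \<Rightarrow> ('a bipoly \<Rightarrow> 'a bipoly) \<Rightarrow> bool" where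
  "aut \<phi> \<psi> \<longleftrightarrow> rhom \<phi> \<and> rhom \<psi> \<and> (\<forall>f. \<phi> (\<psi> f) = f) \<and> (\<forall>f. \<psi> (\<phi> f) = f)"

definition cj :: "('a::field_char_0 bipoly \<Rightarrow> 'a bipoly) \<Rightarrow> ('a bipoly \<Rightarrow> 'a bipoly) \<Rightarrow> ('a bipoly \<Rightarrow> 'a bipoly) \<Rightarrow> 'a bipoly \<Rightarrow> 'a bipoly" where
  "cj \<phi> \<psi> E = (\<lambda>f. \<phi> (E (\<psi> f)))"

lemma aut_sym: "aut \<phi> \<psi> \<Longrightarrow> aut \<psi> \<phi>" by (simp add: aut_def)

context fixes \<phi> \<psi> :: "'a::field_char_0 bipoly \<Rightarrow> 'a bipoly" assumes au: "aut \<phi> \<psi>"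
begin
lemma au_rhom: "rhom \<phi>" "rhom \<psi>" using au by (simp_all add: aut_def)
lemma au_inv: "\<phi> (\<psi> f) = f" "\<psi> (\<phi> f) = f" using au by (simp_all add: aut_def)

lemma cj_der: assumes d: "is_derivation E" shows "is_derivation (cj \<phi> \<psi> E)"
  unfolding is_derivation_def cj_def
proof (intro conjI allI)
  note r1 = au_rhom(1) and r2 = au_rhom(2)
  fix f g
  show "\<phi> (E (\<psi> (f + g))) = \<phi> (E (\<psi> f)) + \<phi> (E (\<psi> g))"
    by (simp add: rhom_add[OF r2] der_add[OF d] rhom_add[OF r1])
  show "\<phi> (E (\<psi> (f * g))) = f * \<phi> (E (\<psi> g)) + g * \<phi> (E (\<psi> f))"
    by (simp add: rhom_mult[OF r2] der_mult[OF d] rhom_add[OF r1] rhom_mult[OF r1] au_inv)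
next
  note r1 = au_rhom(1) and r2 = au_rhom(2)
  fix c f
  show "\<phi> (E (\<psi> (const2 c * f))) = const2 c * \<phi> (E (\<psi> f))"
    by (simp add: rhom_mult[OF r2] rhom_const2[OF r2] der_cmult[OF d] rhom_mult[OF r1] rhom_const2[OF r1])
qed

lemma cj_iter: "((cj \<phi> \<psi> E)^^n) f = \<phi> ((E^^n) (\<psi> f))"
  by (induct n) (simp_all add: iter_Suc cj_def au_inv)

lemma cj_lnd: "is_LND E \<Longrightarrow> is_LND (cj \<phi> \<psi> E)"
  unfolding is_LND_def using cj_der cj_iter rhom_0[OF au_rhom(1)] by metis

lemma rhom_unit: "rhom \<chi> \<Longrightarrow> is_unit u \<Longrightarrow> is_unit (\<chi> u)"
proof -
  assume r: "rhom \<chi>" and u: "is_unit u"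
  then obtain v where "1 = u * v" by (elim dvdE)
  then have "1 = \<chi> u * \<chi> v" using rhom_mult[OF r] rhom_1[OF r] by metis
  then show ?thesis by (rule dvdI)
qed

lemma rhom_dvd: "rhom \<chi> \<Longrightarrow> a dvd b \<Longrightarrow> \<chi> a dvd \<chi> b"
  by (elim dvdE) (simp add: rhom_mult)

lemma cj_irr: "irreducible_der E \<Longrightarrow> irreducible_der (cj \<phi> \<psi> E)"
  unfolding irreducible_der_def
proof (rule notI, elim exE conjE)
  fix h assume irr: "\<not> (\<exists>h. \<not> is_unit h \<and> (\<forall>f. h dvd E f))"
    and nu: "\<not> is_unit h" and dv: "\<forall>f. h dvd cj \<phi> \<psi> E f"
  have "\<psi> h dvd E g" for g
  proof -
    have "h dvd \<phi> (E (\<psi> (\<phi> g)))" using dv by (simp add: cj_def)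
    then have "\<psi> h dvd \<psi> (\<phi> (E (\<psi> (\<phi> g))))" by (rule rhom_dvd[OF au_rhom(2)])
    then show ?thesis by (simp add: au_inv)
  qed
  moreover have "\<not> is_unit (\<psi> h)"
  proof
    assume "is_unit (\<psi> h)"
    then have "is_unit (\<phi> (\<psi> h))" by (rule rhom_unit[OF au_rhom(1)])
    then show False using nu by (simp add: au_inv)
  qed
  ultimately show False using irr by blast
qed

lemma cj_degD: "is_LND E \<Longrightarrow> degD (cj \<phi> \<psi> E) f = degD E (\<psi> f)"
proof -
  assume "is_LND E"
  have "((cj \<phi> \<psi> E)^^Suc m) f = 0 \<longleftrightarrow> (E^^Suc m) (\<psi> f) = 0" for m
    unfolding cj_iter by (metis au_inv(2) rhom_0[OF au_rhom(1)] rhom_0[OF au_rhom(2)])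
  then show ?thesis unfolding degD_def by simp
qed

lemma cj_comm: "E1 \<circ> E2 = E2 \<circ> E1 \<Longrightarrow> cj \<phi> \<psi> E1 \<circ> cj \<phi> \<psi> E2 = cj \<phi> \<psi> E2 \<circ> cj \<phi> \<psi> E1"
proof -
  assume c: "E1 \<circ> E2 = E2 \<circ> E1"
  show ?thesis
  proof (rule ext)
    fix f
    have "E1 (E2 (\<psi> f)) = E2 (E1 (\<psi> f))" using c by (metis comp_apply)
    then show "(cj \<phi> \<psi> E1 \<circ> cj \<phi> \<psi> E2) f = (cj \<phi> \<psi> E2 \<circ> cj \<phi> \<psi> E1) f"
      by (simp add: cj_def au_inv)
  qed
qed

end

definition trip :: "('a::field_char_0 bipoly \<Rightarrow> 'a bipoly) \<Rightarrow> ('a bipoly \<Rightarrow> 'a bipoly) \<Rightarrow> ('a bipoly \<Rightarrow> 'a bipoly) \<Rightarrow> bool" where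
  "trip E1 E2 E3 \<longleftrightarrow> E1 \<circ> E2 = E2 \<circ> E1 \<and>
     (\<exists>a b. a \<in> ker_der E1 \<inter> ker_der E2 \<and> b \<in> ker_der E2 \<and> E3 = (\<lambda>f. a * E1 f + b * E2 f))"

definition chain_ok :: "('a::field_char_0 bipoly \<Rightarrow> 'a bipoly) list \<Rightarrow> bool" where
  "chain_ok ds \<longleftrightarrow> (\<forall>D\<in>set ds. is_LND D \<and> irreducible_der D) \<and>
     (\<forall>j. j + 2 < length ds \<longrightarrow> trip (ds!j) (ds!(j+1)) (ds!(j+2)))"

lemma full_iff: "full_irreducible_C_chain ds \<longleftrightarrow> 2 \<le> length ds \<and> ds!0 = dx \<and> ds!1 = dy \<and> chain_ok ds"
proof -
  have "(\<forall>j. 1 \<le> j \<and> j + 1 < length ds \<longrightarrow>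
        ds ! (j - 1) \<circ> ds ! j = ds ! j \<circ> ds ! (j - 1) \<and>
        (\<exists>a b. a \<in> ker_der (ds ! (j - 1)) \<inter> ker_der (ds ! j) \<and> b \<in> ker_der (ds ! j) \<and>
           ds ! (j + 1) = (\<lambda>f. a * (ds ! (j - 1)) f + b * (ds ! j) f)))
     \<longleftrightarrow> (\<forall>j. j + 2 < length ds \<longrightarrow> trip (ds!j) (ds!(j+1)) (ds!(j+2)))" (is "?L \<longleftrightarrow> ?R")
  proof
    assume A: ?L
    show ?R
    proof (intro allI impI)
      fix j assume "j + 2 < length ds"
      then show "trip (ds!j) (ds!(j+1)) (ds!(j+2))"
        using A[rule_format, of "j+1"] by (simp add: trip_def)
    qed
  next
    assume B: ?R
    show ?L
    proof (intro allI impI)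
      fix j assume j: "1 \<le> j \<and> j + 1 < length ds"
      then obtain i where i: "j = Suc i" by (cases j) auto
      have "trip (ds!i) (ds!(i+1)) (ds!(i+2))" using B j i by simp
      then show "ds ! (j - 1) \<circ> ds ! j = ds ! j \<circ> ds ! (j - 1) \<and>
        (\<exists>a b. a \<in> ker_der (ds ! (j - 1)) \<inter> ker_der (ds ! j) \<and> b \<in> ker_der (ds ! j) \<and>
           ds ! (j + 1) = (\<lambda>f. a * (ds ! (j - 1)) f + b * (ds ! j) f))"
        using i by (simp add: trip_def)
    qed
  qed
  then show ?thesis unfolding full_irreducible_C_chain_def chain_ok_def by blast
qed

lemma trip_cj: assumes au: "aut \<phi> \<psi>" and t: "trip E1 E2 E3"
  shows "trip (cj \<phi> \<psi> E1) (cj \<phi> \<psi> E2) (cj \<phi> \<psi> E3)"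
proof -
  obtain a b where ab: "a \<in> ker_der E1 \<inter> ker_der E2" "b \<in> ker_der E2" "E3 = (\<lambda>f. a * E1 f + b * E2 f)"
    and c: "E1 \<circ> E2 = E2 \<circ> E1" using t by (auto simp: trip_def)
  have r: "rhom \<phi>" "rhom \<psi>" using au by (simp_all add: aut_def)
  have inv: "\<psi> (\<phi> f) = f" for f using au by (simp add: aut_def)
  have "\<phi> a \<in> ker_der (cj \<phi> \<psi> E1) \<inter> ker_der (cj \<phi> \<psi> E2)" "\<phi> b \<in> ker_der (cj \<phi> \<psi> E2)"
    using ab rhom_0[OF r(1)] by (simp_all add: ker_der_def cj_def inv)
  moreover have "cj \<phi> \<psi> E3 = (\<lambda>f. \<phi> a * cj \<phi> \<psi> E1 f + \<phi> b * cj \<phi> \<psi> E2 f)"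
    using ab(3) r(1) by (simp add: cj_def rhom_add rhom_mult)
  ultimately show ?thesis using cj_comm[OF au c] unfolding trip_def by blast
qed

lemma chain_ok_map: assumes au: "aut \<phi> \<psi>" and ok: "chain_ok ds"
  shows "chain_ok (map (cj \<phi> \<psi>) ds)"
  using ok cj_lnd[OF au] cj_irr[OF au] trip_cj[OF au] unfolding chain_ok_def by auto

lemma chain_ok_glue: assumes A: "chain_ok (pre @ [E1, E2])" and B: "chain_ok (E1 # E2 # rest)"
  shows "chain_ok (pre @ E1 # E2 # rest)"
  unfolding chain_ok_def
proof (intro conjI allI impI)
  show "\<forall>D\<in>set (pre @ E1 # E2 # rest). is_LND D \<and> irreducible_der D"
    using A B unfolding chain_ok_def by auto
next
  fix j assume j: "j + 2 < length (pre @ E1 # E2 # rest)"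
  show "trip ((pre @ E1 # E2 # rest) ! j) ((pre @ E1 # E2 # rest) ! (j+1)) ((pre @ E1 # E2 # rest) ! (j+2))"
  proof (cases "j < length pre")
    case True
    have e: "(pre @ E1 # E2 # rest) ! k = (pre @ [E1, E2]) ! k" if "k < length pre + 2" for k
      using that by (auto simp: nth_append nth_Cons split: nat.splits)
    have "trip ((pre @ [E1, E2]) ! j) ((pre @ [E1, E2]) ! (j+1)) ((pre @ [E1, E2]) ! (j+2))"
      using A True unfolding chain_ok_def by simp
    then show ?thesis using True e by simp
  next
    case False
    define i where "i = j - length pre"
    have e: "(pre @ E1 # E2 # rest) ! (k + length pre) = (E1 # E2 # rest) ! k" for k
      by (simp add: nth_append)
    have "i + 2 < length (E1 # E2 # rest)" using j False by (simp add: i_def)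
    then have "trip ((E1 # E2 # rest) ! i) ((E1 # E2 # rest) ! (i+1)) ((E1 # E2 # rest) ! (i+2))"
      using B unfolding chain_ok_def by blast
    then show ?thesis using e[of i] e[of "i+1"] e[of "i+2"] False by (simp add: i_def)
  qed
qed

definition has_chain :: "('a::field_char_0 bipoly \<Rightarrow> 'a bipoly) \<Rightarrow> bool" where
  "has_chain D \<longleftrightarrow> (\<exists>ds. full_irreducible_C_chain ds \<and> last ds = D)"

definition good :: "('a::field_char_0 bipoly \<Rightarrow> 'a bipoly) \<Rightarrow> ('a bipoly \<Rightarrow> 'a bipoly) \<Rightarrow> bool" where
  "good \<phi> \<psi> \<longleftrightarrow> aut \<phi> \<psi> \<and> (\<exists>pre. full_irreducible_C_chain (pre @ [cj \<phi> \<psi> dx, cj \<phi> \<psi> dy]))"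

lemma transfer: assumes g: "good \<phi> \<psi>" and h: "has_chain E" shows "has_chain (cj \<phi> \<psi> E)"
proof -
  obtain pre where au: "aut \<phi> \<psi>" and P: "full_irreducible_C_chain (pre @ [cj \<phi> \<psi> dx, cj \<phi> \<psi> dy])"
    using g by (auto simp: good_def)
  obtain ds where ds: "full_irreducible_C_chain ds" "last ds = E" using h by (auto simp: has_chain_def)
  obtain rest where r: "ds = dx # dy # rest"
    using ds(1) unfolding full_iff
    by (cases ds rule: remdups_adj.cases) auto
  have okm: "chain_ok (map (cj \<phi> \<psi>) ds)" using ds(1) chain_ok_map[OF au] by (simp add: full_iff)
  then have ok2: "chain_ok (cj \<phi> \<psi> dx # cj \<phi> \<psi> dy # map (cj \<phi> \<psi>) rest)" using r by simp
  have ok1: "chain_ok (pre @ [cj \<phi> \<psi> dx, cj \<phi> \<psi> dy])" using P by (simp add: full_iff)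
  define L where "L = pre @ cj \<phi> \<psi> dx # cj \<phi> \<psi> dy # map (cj \<phi> \<psi>) rest"
  have okL: "chain_ok L" unfolding L_def by (rule chain_ok_glue[OF ok1 ok2])
  have hd: "L ! 0 = dx" "L ! 1 = dy" "2 \<le> length L"
  proof -
    have "L ! k = (pre @ [cj \<phi> \<psi> dx, cj \<phi> \<psi> dy]) ! k" if "k < length pre + 2" for k
      using that by (auto simp: L_def nth_append nth_Cons split: nat.splits)
    then show "L ! 0 = dx" "L ! 1 = dy" using P by (simp_all add: full_iff)
    show "2 \<le> length L" by (simp add: L_def)
  qed
  have "last L = cj \<phi> \<psi> E"
  proof (cases rest)
    case Nil then show ?thesis using ds(2) r by (simp add: L_def)
  next
    case (Cons x xs)
    then have "last L = last (map (cj \<phi> \<psi>) rest)" by (simp add: L_def)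
    also have "\<dots> = cj \<phi> \<psi> (last rest)" using Cons by (simp add: last_map)
    also have "last rest = E" using ds(2) r Cons by simp
    finally show ?thesis .
  qed
  then show ?thesis unfolding has_chain_def using okL hd by (auto simp: full_iff)
qed


lemma lnd_from_gens:
  fixes D :: "'a::field_char_0 bipoly \<Rightarrow> 'a bipoly"
  assumes der: "is_derivation D" and kx: "(D^^Suc m) Xv = 0" and ky: "(D^^Suc n) Yv = 0"
  shows "is_LND D"
proof (rule lnd_from_monomials[OF der])
  fix i j
  have a: "(D^^Suc (i*m)) (Xv^i) = 0" using Lf_pow[OF der kx] by blast
  have b: "(D^^Suc (j*n)) (Yv^j) = 0" using Lf_pow[OF der ky] by blast
  show "\<exists>k. (D^^k) (Xv^i * Yv^j) = 0" using Lf_mult(1)[OF der a b] by blast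
qed

lemma lnd_dx: "is_LND (dx :: 'a::field_char_0 bipoly \<Rightarrow> _)"
  by (rule lnd_from_gens[OF is_derivation_dx, of 1 0]) (simp_all add: iter_Suc der_1[OF is_derivation_dx])
lemma lnd_dy: "is_LND (dy :: 'a::field_char_0 bipoly \<Rightarrow> _)"
  by (rule lnd_from_gens[OF is_derivation_dy, of 0 1]) (simp_all add: iter_Suc der_1[OF is_derivation_dy])

lemma irr_val1: "E f = 1 \<Longrightarrow> irreducible_der E"
  unfolding irreducible_der_def by (metis)

lemma irr_dx: "irreducible_der (dx :: 'a::field_char_0 bipoly \<Rightarrow> _)" by (rule irr_val1[of _ Xv]) simp
lemma irr_dy: "irreducible_der (dy :: 'a::field_char_0 bipoly \<Rightarrow> _)" by (rule irr_val1[of _ Yv]) simp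

lemma pderiv_of_nat_mult: "pderiv (of_nat n * p) = of_nat n * pderiv (p :: 'a::idom poly)"
  by (simp add: pderiv_mult)

lemma comm_dxdy: "dx \<circ> dy = dy \<circ> (dx :: 'a::field_char_0 bipoly \<Rightarrow> _)"
proof (rule ext)
  fix f :: "'a bipoly"
  show "(dx \<circ> dy) f = (dy \<circ> dx) f"
    by (rule poly_eqI) (simp add: coeff_dx dy_def coeff_pderiv pderiv_of_nat_mult del: of_nat_Suc)
qed

lemma trip_base: "trip dx dy (dx :: 'a::field_char_0 bipoly \<Rightarrow> _)"
proof -
  have c: "dx \<circ> dy = dy \<circ> (dx :: 'a bipoly \<Rightarrow> _)" by (rule comm_dxdy)
  have k1: "(1::'a bipoly) \<in> ker_der dx \<inter> ker_der dy"
    by (simp add: ker_der_def der_1[OF is_derivation_dx] der_1[OF is_derivation_dy])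
  have k0: "(0::'a bipoly) \<in> ker_der dy" by (simp add: ker_der_def der_0[OF is_derivation_dy])
  have e: "dx = (\<lambda>f. 1 * dx f + 0 * dy (f::'a bipoly))" by simp
  show ?thesis unfolding trip_def using c k1 k0 e by blast
qed

lemma full_dxdydx: "full_irreducible_C_chain [dx, dy, dx :: 'a::field_char_0 bipoly \<Rightarrow> _]"
  unfolding full_iff chain_ok_def
  using lnd_dx lnd_dy irr_dx irr_dy trip_base by (auto simp: less_Suc_eq)

definition sw :: "'a::field_char_0 bipoly \<Rightarrow> 'a bipoly" where "sw = subst Yv Xv"

lemma aut_sw: "aut sw sw"
proof -
  have h: "subst Yv Xv (subst Yv Xv f) = f" for f :: "'a bipoly"
  proof -
    have "(subst Yv Xv \<circ> subst Yv Xv) f = id f"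
      by (rule rhom_ext[OF rhom_comp[OF rhom_subst rhom_subst] rhom_id]) simp_all
    then show ?thesis by simp
  qed
  show ?thesis unfolding aut_def sw_def using h rhom_subst by blast
qed

lemma sw_dx: "cj sw sw dx = dy"
proof (rule ext, rule der_ext[OF cj_der[OF aut_sw is_derivation_dx] is_derivation_dy])
  show "cj sw sw dx Xv = dy Xv" by (simp add: cj_def sw_def)
  show "cj sw sw dx Yv = dy Yv" by (simp add: cj_def sw_def)
qed

lemma sw_dy: "cj sw sw dy = dx"
proof (rule ext, rule der_ext[OF cj_der[OF aut_sw is_derivation_dy] is_derivation_dx])
  show "cj sw sw dy Xv = dx Xv" by (simp add: cj_def sw_def)
  show "cj sw sw dy Yv = dx Yv" by (simp add: cj_def sw_def)
qed

lemma good_sw: "good sw sw"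
  unfolding good_def using aut_sw full_dxdydx
  by (intro conjI exI[of _ "[dx]"]) (simp_all add: sw_dx sw_dy)

definition tph :: "'a::field_char_0 \<Rightarrow> nat \<Rightarrow> 'a bipoly \<Rightarrow> 'a bipoly" where
  "tph c k = subst (Xv - const2 c * Yv^k) Yv"
definition tps :: "'a::field_char_0 \<Rightarrow> nat \<Rightarrow> 'a bipoly \<Rightarrow> 'a bipoly" where
  "tps c k = subst (Xv + const2 c * Yv^k) Yv"

lemma aut_tri: "aut (tph c k) (tps c k)"
proof -
  have a: "tph c k (tps c k f) = f" for f
  proof -
    have "(subst (Xv - const2 c * Yv^k) Yv \<circ> subst (Xv + const2 c * Yv^k) Yv) f = id f"
      by (rule rhom_ext[OF rhom_comp[OF rhom_subst rhom_subst] rhom_id])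
        (simp_all add: subst_add subst_diff subst_mult subst_pow)
    then show ?thesis by (simp add: tph_def tps_def)
  qed
  have b: "tps c k (tph c k f) = f" for f
  proof -
    have "(subst (Xv + const2 c * Yv^k) Yv \<circ> subst (Xv - const2 c * Yv^k) Yv) f = id f"
      by (rule rhom_ext[OF rhom_comp[OF rhom_subst rhom_subst] rhom_id])
        (simp_all add: subst_add subst_diff subst_mult subst_pow)
    then show ?thesis by (simp add: tph_def tps_def)
  qed
  show ?thesis using a b by (simp add: aut_def tph_def tps_def rhom_subst)
qed

lemma dx_Ypow: "dx (Yv^k) = (0::'a::field_char_0 bipoly)"
  by (induct k) (simp_all add: der_mult[OF is_derivation_dx] der_1[OF is_derivation_dx])

lemma dy_Ypow: "dy (Yv^Suc k) = of_nat (Suc k) * (Yv^k :: 'a::field_char_0 bipoly)"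
  using der_pow[OF is_derivation_dy, of Yv k] by simp

lemma tri_dx: "cj (tph c k) (tps c k) dx = dx"
proof (rule ext, rule der_ext[OF cj_der[OF aut_tri is_derivation_dx] is_derivation_dx])
  show "cj (tph c k) (tps c k) dx Xv = dx Xv"
    by (simp add: cj_def tps_def tph_def der_add[OF is_derivation_dx] der_cmult[OF is_derivation_dx] dx_Ypow)
  show "cj (tph c k) (tps c k) dx Yv = dx Yv"
    by (simp add: cj_def tps_def tph_def)
qed

lemma tri_dy: assumes k1: "1 \<le> k"
  shows "cj (tph c k) (tps c k) dy = der2 (const2 (c * of_nat k) * Yv^(k-1)) 1"
proof (rule ext, rule der_ext[OF cj_der[OF aut_tri is_derivation_dy] is_derivation_der2])
  obtain k' where k': "k = Suc k'" using k1 by (cases k) auto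
  have dyk: "dy (Yv^k) = of_nat k * (Yv^(k-1) :: 'a bipoly)" unfolding k' diff_Suc_1 by (rule dy_Ypow)
  have "dy (Xv + const2 c * Yv^k) = const2 c * dy (Yv^k)"
    by (simp add: der_add[OF is_derivation_dy] der_cmult[OF is_derivation_dy])
  also have "\<dots> = const2 (c * of_nat k) * (Yv^(k-1) :: 'a bipoly)"
    unfolding dyk const2_mult const2_of_nat by (simp add: mult.assoc)
  finally have "dy (Xv + const2 c * Yv^k) = const2 (c * of_nat k) * (Yv^(k-1) :: 'a bipoly)" .
  then show "cj (tph c k) (tps c k) dy Xv = der2 (const2 (c * of_nat k) * Yv^(k-1)) 1 Xv"
    by (simp add: cj_def tps_def tph_def subst_mult subst_pow)
  show "cj (tph c k) (tps c k) dy Yv = der2 (const2 (c * of_nat k) * Yv^(k-1)) 1 Yv"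
    by (simp add: cj_def tps_def tph_def)
qed

lemma good_tri: assumes k1: "1 \<le> k" shows "good (tph c k) (tps c k)"
proof -
  define b where "b = const2 (c * of_nat k) * (Yv^(k-1) :: 'a bipoly)"
  define G where "G = der2 b 1"
  have G: "cj (tph c k) (tps c k) dy = G" using tri_dy[OF k1] by (simp add: G_def b_def)
  have lG: "is_LND G" using cj_lnd[OF aut_tri[of c k] lnd_dy] G by simp
  have iG: "irreducible_der G" using cj_irr[OF aut_tri[of c k] irr_dy] G by simp
  have t2: "trip dy dx G"
  proof -
    have c: "dy \<circ> dx = dx \<circ> (dy :: 'a bipoly \<Rightarrow> _)" by (rule comm_dxdy[symmetric])
    have k1: "(1::'a bipoly) \<in> ker_der dy \<inter> ker_der dx"
      by (simp add: ker_der_def der_1[OF is_derivation_dx] der_1[OF is_derivation_dy])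
    have kb: "b \<in> ker_der dx" by (simp add: ker_der_def b_def der_cmult[OF is_derivation_dx] dx_Ypow)
    have e: "G = (\<lambda>f. 1 * dy f + b * dx f)" by (rule ext) (simp add: G_def der2_def mult.commute)
    show ?thesis unfolding trip_def using c k1 kb e by blast
  qed
  have "full_irreducible_C_chain [dx, dy, dx, G]"
    unfolding full_iff chain_ok_def
  proof (intro conjI allI impI)
    show "\<forall>D\<in>set [dx, dy, dx, G]. is_LND D \<and> irreducible_der D"
      using lnd_dx lnd_dy irr_dx irr_dy lG iG by auto
  next
    fix j assume "j + 2 < length [dx, dy, dx, G]"
    then have "j = 0 \<or> j = 1" by auto
    then show "trip ([dx, dy, dx, G] ! j) ([dx, dy, dx, G] ! (j + 1)) ([dx, dy, dx, G] ! (j + 2))"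
      using trip_base t2 by auto
  qed simp_all
  then show ?thesis unfolding good_def using aut_tri[of c k] G tri_dx[of c k]
    by (intro conjI exI[of _ "[dx, dy]"]) simp_all
qed

lemma cj_cancel: "aut \<phi> \<psi> \<Longrightarrow> cj \<phi> \<psi> (cj \<psi> \<phi> E) = E"
  by (rule ext) (simp add: cj_def aut_def)

lemma main_thm:
  fixes D :: "'a::field_char_0 bipoly \<Rightarrow> 'a bipoly"
  shows "is_LND D \<Longrightarrow> irreducible_der D \<Longrightarrow> has_chain D"
proof (induct "degD D Xv + degD D Yv" arbitrary: D rule: less_induct)
  case less
  note lnd = less(2) and irr = less(3)
  note der = lnd_der[OF lnd]
  show ?case
  proof (cases "degD D Xv = 0")
    case True
    then have DX: "D Xv = 0" using degD_zero_iff[OF lnd] by simp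
    define Q where "Q = D Yv"
    have Df: "D f = dy f * Q" for f using chain_rule[OF der] DX by (metis der2_def Q_def mult_zero_right add_0)
    have "is_unit Q" using irr Df unfolding irreducible_der_def by auto
    then obtain q where q: "q \<noteq> 0" "Q = const2 q" using unit_bipoly by blast
    have t: "trip dx dy D"
    proof -
      have c: "dx \<circ> dy = dy \<circ> (dx :: 'a bipoly \<Rightarrow> _)" by (rule comm_dxdy)
      have k0: "(0::'a bipoly) \<in> ker_der dx \<inter> ker_der dy"
        by (simp add: ker_der_def der_0[OF is_derivation_dx] der_0[OF is_derivation_dy])
      have kQ: "Q \<in> ker_der dy" using q by (simp add: ker_der_def der_const2[OF is_derivation_dy])
      have e: "D = (\<lambda>f. 0 * dx f + Q * dy f)" by (rule ext) (simp add: Df mult.commute)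
      show ?thesis unfolding trip_def using c k0 kQ e by blast
    qed
    have "full_irreducible_C_chain [dx, dy, D]"
      unfolding full_iff chain_ok_def using lnd_dx lnd_dy irr_dx irr_dy lnd irr t
      by (auto simp: less_Suc_eq)
    then show ?thesis unfolding has_chain_def by (intro exI[of _ "[dx, dy, D]"]) simp
  next
    case Xne: False
    show ?thesis
    proof (cases "degD D Yv = 0")
      case True
      then have DY: "D Yv = 0" using degD_zero_iff[OF lnd] by simp
      define P where "P = D Xv"
      have Df: "D f = dx f * P" for f using chain_rule[OF der] DY by (metis der2_def P_def mult_zero_right add_0_right)
      have "is_unit P" using irr Df unfolding irreducible_der_def by auto
      then obtain q where q: "q \<noteq> 0" "P = const2 q" using unit_bipoly by blast
      have t: "trip dx dy D"
      proof -
        have c: "dx \<circ> dy = dy \<circ> (dx :: 'a bipoly \<Rightarrow> _)" by (rule comm_dxdy)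
        have kP: "P \<in> ker_der dx \<inter> ker_der dy"
          using q by (simp add: ker_der_def der_const2[OF is_derivation_dx] der_const2[OF is_derivation_dy])
        have k0: "(0::'a bipoly) \<in> ker_der dy" by (simp add: ker_der_def der_0[OF is_derivation_dy])
        have e: "D = (\<lambda>f. P * dx f + 0 * dy f)" by (rule ext) (simp add: Df mult.commute)
        show ?thesis unfolding trip_def using c kP k0 e by blast
      qed
      have "full_irreducible_C_chain [dx, dy, D]"
        unfolding full_iff chain_ok_def using lnd_dx lnd_dy irr_dx irr_dy lnd irr t
        by (auto simp: less_Suc_eq)
      then show ?thesis unfolding has_chain_def by (intro exI[of _ "[dx, dy, D]"]) simp
    next
      case Yne: False
      have step: "has_chain E" if lE: "is_LND E" and iE: "irreducible_der E"
        and m: "degD E Xv + degD E Yv = degD D Xv + degD D Yv"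
        and y1: "1 \<le> degD E Yv" and yx: "degD E Yv \<le> degD E Xv" for E :: "'a bipoly \<Rightarrow> 'a bipoly"
      proof -
        obtain k c where k1: "1 \<le> k" and kill: "(E^^(degD E Xv)) (Xv - const2 c * Yv^k) = 0"
          using KL_half[OF lE y1 yx] by blast
        define E2 where "E2 = cj (tps c k) (tph c k) E"
        have au': "aut (tps c k) (tph c k)" by (rule aut_sym[OF aut_tri])
        have lE2: "is_LND E2" unfolding E2_def by (rule cj_lnd[OF au' lE])
        have iE2: "irreducible_der E2" unfolding E2_def by (rule cj_irr[OF au' iE])
        have dX: "degD E2 Xv = degD E (Xv - const2 c * Yv^k)"
          unfolding E2_def cj_degD[OF au' lE] by (simp add: tph_def subst_diff subst_mult subst_pow)
        have dY: "degD E2 Yv = degD E Yv"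
          unfolding E2_def cj_degD[OF au' lE] by (simp add: tph_def)
        have x1: "1 \<le> degD E Xv" using y1 yx by simp
        have "degD E (Xv - const2 c * Yv^k) \<le> degD E Xv - 1"
          by (rule degD_le[OF lE]) (use kill x1 in simp)
        then have "degD E2 Xv + degD E2 Yv < degD D Xv + degD D Yv" using dX dY m x1 by linarith
        then have "has_chain E2" using less(1) lE2 iE2 by blast
        then have "has_chain (cj (tph c k) (tps c k) E2)" by (rule transfer[OF good_tri[OF k1]])
        then show ?thesis unfolding E2_def cj_cancel[OF aut_tri] .
      qed
      show ?thesis
      proof (cases "degD D Yv \<le> degD D Xv")
        case True
        then show ?thesis using step[OF lnd irr] Yne by simp
      next
        case False
        define D' where "D' = cj sw sw D"
        have lD': "is_LND D'" unfolding D'_def by (rule cj_lnd[OF aut_sw lnd])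
        have iD': "irreducible_der D'" unfolding D'_def by (rule cj_irr[OF aut_sw irr])
        have dX: "degD D' Xv = degD D Yv" unfolding D'_def cj_degD[OF aut_sw lnd] by (simp add: sw_def)
        have dY: "degD D' Yv = degD D Xv" unfolding D'_def cj_degD[OF aut_sw lnd] by (simp add: sw_def)
        have "has_chain D'" using step[OF lD' iD'] dX dY Xne False by simp
        then have "has_chain (cj sw sw D')" by (rule transfer[OF good_sw])
        then show ?thesis unfolding D'_def cj_cancel[OF aut_sw] .
      qed
    qed
  qed
qed

theorem proposition3p9:
  fixes \<delta> :: "'a::field_char_0 bipoly \<Rightarrow> 'a bipoly"
  assumes "is_LND \<delta>" and "irreducible_der \<delta>"
  shows "\<exists>ds. full_irreducible_C_chain ds \<and> last ds = \<delta>"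
  using main_thm[OF assms] by (simp add: has_chain_def)


end
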